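(* Fix $\alpha,\beta>0$. For $n\ge2$ let $S$ be a random $\alpha/\beta$-staircase tableau of size $n$ with law $\mathbb{P}_{n,\alpha,\beta}$, and let $A_n$ be the number of boxes $(n-j,j)$, $1\le j\le n-1$ (the second main diagonal), that contain $\alpha$. Then, as $n\to\infty$, $A_n$ converges in distribution to a Poisson random variable with parameter $1/2$.
   Context: A staircase tableau of size $n$ has boxes $(i,j)$ with $i,j\ge1$ and $i+j\le n+1$, rows numbered from the top and columns from the left. An $\alpha/\beta$-staircase tableau of size $n$ is a filling in which each box is empty or contains $\alpha$ or $\beta$, such that: all boxes in the same column and above an $\alpha$ are empty; all boxes in the same row and to the left of a $\beta$ are empty; every main-diagonal box (with $i+j=n+1$) contains a symbol. $\overline{\mathcal{S}}_n$ is the set of these. The weight is $wt(S)=\alpha^{N_\alpha}\beta^{N_\beta}$ ($N_\alpha,N_\beta$ the numbers of $\alpha$'s, $\beta$'s), and $\mathbb{P}_{n,\alpha,\beta}(S)=wt(S)/\sum_{T\in\overline{\mathcal{S}}_n}wt(T)$. *)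

theory Defs
  imports "HOL-Probability.Probability"
begin

datatype cell = Empty | Alpha | Beta

definition is_box :: "nat \<Rightarrow> nat \<times> nat \<Rightarrow> bool" where
  "is_box n b \<longleftrightarrow> (case b of (i, j) \<Rightarrow> 1 \<le> i \<and> 1 \<le> j \<and> i + j \<le> n + 1)"

text \<open>Alpha/beta staircase tableaux of size n: fillings of the boxes (i,j) (row i, column j),
  empty outside the staircase.\<close>
definition staircase :: "nat \<Rightarrow> (nat \<times> nat \<Rightarrow> cell) set" where
  "staircase n = {S.
     (\<forall>b. \<not> is_box n b \<longrightarrow> S b = Empty) \<and>
     (\<forall>i j. is_box n (i, j) \<and> S (i, j) = Alpha \<longrightarrow> (\<forall>i'. 1 \<le> i' \<and> i' < i \<longrightarrow> S (i', j) = Empty)) \<and>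
     (\<forall>i j. is_box n (i, j) \<and> S (i, j) = Beta \<longrightarrow> (\<forall>j'. 1 \<le> j' \<and> j' < j \<longrightarrow> S (i, j') = Empty)) \<and>
     (\<forall>i j. is_box n (i, j) \<and> i + j = n + 1 \<longrightarrow> S (i, j) \<noteq> Empty)}"

definition num_sym :: "nat \<Rightarrow> cell \<Rightarrow> (nat \<times> nat \<Rightarrow> cell) \<Rightarrow> nat" where
  "num_sym n c S = card {b. is_box n b \<and> S b = c}"

definition wt :: "real \<Rightarrow> real \<Rightarrow> nat \<Rightarrow> (nat \<times> nat \<Rightarrow> cell) \<Rightarrow> real" where
  "wt \<alpha> \<beta> n S = \<alpha> ^ num_sym n Alpha S * \<beta> ^ num_sym n Beta S"

definition stair_prob :: "real \<Rightarrow> real \<Rightarrow> nat \<Rightarrow> (nat \<times> nat \<Rightarrow> cell) \<Rightarrow> real" where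
  "stair_prob \<alpha> \<beta> n S = wt \<alpha> \<beta> n S / (\<Sum>T\<in>staircase n. wt \<alpha> \<beta> n T)"

definition stair_measure :: "real \<Rightarrow> real \<Rightarrow> nat \<Rightarrow> (nat \<times> nat \<Rightarrow> cell) measure" where
  "stair_measure \<alpha> \<beta> n = point_measure (staircase n) (\<lambda>S. ennreal (stair_prob \<alpha> \<beta> n S))"

definition A_count :: "nat \<Rightarrow> (nat \<times> nat \<Rightarrow> cell) \<Rightarrow> nat" where
  "A_count n S = card {j. 1 \<le> j \<and> j \<le> n - 1 \<and> S (n - j, j) = Alpha}"

definition A_law :: "real \<Rightarrow> real \<Rightarrow> nat \<Rightarrow> real measure" where
  "A_law \<alpha> \<beta> n = distr (stair_measure \<alpha> \<beta> n) borel (\<lambda>S. real (A_count n S))"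

end

theory Submission
  imports Defs "HOL-Real_Asymp.Real_Asymp"
begin


fun ee :: "nat \<Rightarrow> real \<Rightarrow> nat \<Rightarrow> real" where
  "ee 0 y L = 1"
| "ee (Suc k) y 0 = 0"
| "ee (Suc k) y (Suc L) = y * ee k (y+1) L + ee (Suc k) (y+1) L"

lemma ee_nonneg: "0 \<le> y \<Longrightarrow> 0 \<le> ee k y L"
  by (induction k y L rule: ee.induct) auto

lemma ee_mono_y: "0 \<le> y \<Longrightarrow> y \<le> y' \<Longrightarrow> ee k y L \<le> ee k y' L"
proof (induction k y L arbitrary: y' rule: ee.induct)
  case (3 k y L)
  have "y * ee k (y+1) L \<le> y' * ee k (y'+1) L"
    using 3 by (intro mult_mono) (auto intro: ee_nonneg)
  moreover have "ee (Suc k) (y+1) L \<le> ee (Suc k) (y'+1) L" using 3 by auto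
  ultimately show ?case by simp
qed auto

lemma ee_shift: "0 \<le> y \<Longrightarrow> ee k (y+1) L \<le> ee k y (Suc L)"
  by (cases k) (auto intro!: ee_nonneg mult_nonneg_nonneg)

lemma ee_mono_L1: "0 \<le> y \<Longrightarrow> ee k y L \<le> ee k y (Suc L)"
  using ee_mono_y[of y "y+1" k L] ee_shift[of y k L] by auto

lemma ee_mono_L: assumes "0 \<le> y" "L \<le> L'" shows "ee k y L \<le> ee k y L'"
  using assms(2)
proof (induction L' rule: dec_induct)
  case base show ?case by simp
next
  case (step n) then show ?case using ee_mono_L1[of y k n] assms(1) by auto
qed

lemma ee_sum: "ee (Suc k) x L = (\<Sum>j<L. (x + j) * ee k (x + j + 1) (L - 1 - j))"
proof (induction L arbitrary: x)
  case (Suc L)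
  have "ee (Suc k) x (Suc L) = x * ee k (x+1) L + (\<Sum>j<L. (x + 1 + j) * ee k (x + 1 + j + 1) (L - 1 - j))"
    using Suc by simp
  also have "\<dots> = (\<Sum>j<Suc L. (x + j) * ee k (x + j + 1) (Suc L - 1 - j))"
    unfolding sum.lessThan_Suc_shift by (simp add: algebra_simps)
  finally show ?case .
qed simp

definition ss :: "real \<Rightarrow> nat \<Rightarrow> real" where
  "ss y L = real L * y + real L * (real L - 1) / 2"

lemma ss_Suc: "ss y (Suc L) = y + ss (y+1) L"
  unfolding ss_def by (simp add: field_simps)

lemma ss_nonneg: "0 \<le> y \<Longrightarrow> 0 \<le> ss y L"
  unfolding ss_def by (cases L) auto

lemma bern_aux:
  fixes b y :: real
  assumes "0 \<le> b" "0 \<le> y"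
  shows "b^(Suc k) + real (Suc k) * y * b^k \<le> (y+b)^(Suc k)"
  using assms
proof (induction k)
  case 0 then show ?case by simp
next
  case (Suc k)
  have "b^(Suc (Suc k)) + real (Suc (Suc k)) * y * b^(Suc k) \<le> (y+b) * (b^(Suc k) + real (Suc k) * y * b^k)"
    using Suc.prems by (simp add: algebra_simps)
  also have "\<dots> \<le> (y+b) * (y+b)^(Suc k)"
    using Suc by (intro mult_left_mono) auto
  finally show ?case by simp
qed

lemma ee_upper: "0 \<le> y \<Longrightarrow> ee k y L \<le> (ss y L)^k / fact k"
proof (induction k y L rule: ee.induct)
  case (2 k y) then show ?case by (simp add: ss_def)
next
  case (3 k y L)
  let ?s = "ss (y+1) L"
  have s0: "0 \<le> ?s" using 3 by (intro ss_nonneg) auto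
  have "ee (Suc k) y (Suc L) = y * ee k (y+1) L + ee (Suc k) (y+1) L" by simp
  also have "\<dots> \<le> y * (?s^k / fact k) + ?s^(Suc k) / fact (Suc k)"
  proof (rule add_mono)
    show "y * ee k (y + 1) L \<le> y * (?s ^ k / fact k)" using 3 by (intro mult_left_mono) auto
    show "ee (Suc k) (y + 1) L \<le> ?s ^ Suc k / fact (Suc k)" using 3 by simp
  qed
  also have "\<dots> = (?s^(Suc k) + (Suc k) * y * ?s^k) / fact (Suc k)"
  proof -
    have f: "fact (Suc k) = real (Suc k) * (fact k :: real)" by simp
    have c: "real (Suc k) * (y * ?s^k) / (real (Suc k) * fact k) = y * (?s^k / fact k)"
      by (subst mult_divide_mult_cancel_left) auto
    show ?thesis unfolding add_divide_distrib using c f by (simp add: mult.assoc)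
  qed
  also have "\<dots> \<le> (y + ?s)^(Suc k) / fact (Suc k)"
    using bern_aux[OF s0 3(3), of k] by (intro divide_right_mono) auto
  finally show ?case by (simp add: ss_Suc)
qed simp

lemma pow_diff_le:
  fixes A B :: real
  assumes "0 \<le> B" "B \<le> A"
  shows "A^(Suc n) - B^(Suc n) \<le> (Suc n) * A^n * (A - B)"
  using assms
proof (induction n)
  case (Suc n)
  have "A^(Suc (Suc n)) - B^(Suc (Suc n)) = A * (A^(Suc n) - B^(Suc n)) + B^(Suc n) * (A - B)"
    by (simp add: algebra_simps)
  also have "\<dots> \<le> A * ((Suc n) * A^n * (A - B)) + A^(Suc n) * (A - B)"
    using Suc by (intro add_mono mult_left_mono mult_right_mono power_mono) auto
  also have "\<dots> = (Suc (Suc n)) * A^(Suc n) * (A - B)" by (simp add: algebra_simps)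
  finally show ?case .
qed simp

lemma lower_aux:
  fixes v y M :: real
  assumes "0 \<le> y" "y \<le> M"
  shows "(max 0 (v+y))^(Suc n) \<le> (max 0 v)^(Suc n) + (Suc n) * y * (max 0 (v + M))^n"
proof -
  let ?A = "max 0 (v+y)" and ?B = "max 0 v"
  have "?A^(Suc n) - ?B^(Suc n) \<le> (Suc n) * ?A^n * (?A - ?B)"
    by (rule pow_diff_le) (use assms in auto)
  also have "\<dots> \<le> (Suc n) * (max 0 (v + M))^n * y"
    using assms by (intro mult_mono power_mono) auto
  finally show ?thesis by (simp add: algebra_simps)
qed

lemma ee_lower: "0 \<le> y \<Longrightarrow> (max 0 (ss y L - k * (y + L)))^k / fact k \<le> ee k y L"
proof (induction k y L rule: ee.induct)
  case (2 k y) then show ?case by (simp add: ss_def)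
next
  case (3 k y L)
  let ?s = "ss (y+1) L" and ?M = "y + 1 + real L"
  let ?v = "?s - (Suc k) * ?M"
  have "(max 0 (ss y (Suc L) - (Suc k) * (y + Suc L)))^(Suc k) = (max 0 (?v + y))^(Suc k)"
    by (simp add: ss_Suc algebra_simps)
  also have "\<dots> \<le> (max 0 ?v)^(Suc k) + (Suc k) * y * (max 0 (?v + ?M))^k"
    by (rule lower_aux) (use 3 in auto)
  finally have **: "(max 0 (ss y (Suc L) - (Suc k) * (y + Suc L)))^(Suc k) / fact (Suc k)
     \<le> ((max 0 ?v)^(Suc k) + (Suc k) * y * (max 0 (?v + ?M))^k) / fact (Suc k)"
    by (intro divide_right_mono) auto
  have f: "fact (Suc k) = real (Suc k) * (fact k :: real)" by simp
  have ***: "((max 0 ?v)^(Suc k) + (Suc k) * y * (max 0 (?v + ?M))^k) / fact (Suc k)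
     = (max 0 ?v)^(Suc k) / fact (Suc k) + y * ((max 0 (?v + ?M))^k / fact k)"
    unfolding add_divide_distrib f by simp
  have vm: "?v + ?M = ss (y+1) L - real k * (y + 1 + real L)" by (simp add: algebra_simps)
  have e1: "(max 0 (?v + ?M))^k / fact k \<le> ee k (y+1) L"
    using 3(1) 3(3) unfolding vm by simp
  have e2: "(max 0 ?v)^(Suc k) / fact (Suc k) \<le> ee (Suc k) (y+1) L"
    using 3(2) 3(3) by simp
  have "y * ((max 0 (?v + ?M))^k / fact k) \<le> y * ee k (y+1) L"
    using e1 3(3) by (rule mult_left_mono)
  then show ?case using ** *** e2 by simp
qed simp

lemma lim_r1: "((\<lambda>N::nat. ((real N - 1) * x + (real N - 1) * (real N - 1 - 1) / 2) / (x + a + real N - 2 * real k)^2) \<longlongrightarrow> 1/2) at_top"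
  by real_asymp

lemma lim_r2: "((\<lambda>N::nat. ((real N + 1 - 2 * real k) * x + (real N + 1 - 2 * real k) * (real N + 1 - 2 * real k - 1) / 2
     - real k * (x + (real N + 1 - 2 * real k))) / (x + a + real N)^2) \<longlongrightarrow> 1/2) at_top"
  by real_asymp

fun cc :: "real \<Rightarrow> nat \<Rightarrow> nat \<Rightarrow> real \<Rightarrow> real" where
  "cc a 0 N x = 1"
| "cc a (Suc k) N x = (if N < 2 then 0 else
     (\<Sum>j<N-1. (x + real j) * cc a k (N-2-j) (x + real j)) / ((x + a + real N - 2) * (x + a + real N - 1)))"

lemma cc_nonneg: "0 \<le> x \<Longrightarrow> 0 < a \<Longrightarrow> 0 \<le> cc a k N x"
proof (induction k arbitrary: N x)
  case (Suc k)
  show ?case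
  proof (cases "N < 2")
    case False
    then have "0 < x + a + real N - 2" using Suc by auto
    moreover have "0 \<le> (\<Sum>j<N-1. (x + real j) * cc a k (N-2-j) (x + real j))"
      using Suc by (intro sum_nonneg mult_nonneg_nonneg) auto
    ultimately show ?thesis using False by simp
  qed simp
qed simp

lemma cc_upper:
  assumes "0 \<le> x" "0 < a" "2 * real k < x + a + real N"
  shows "cc a k N x \<le> ee k x (N-1) / (x + a + real N - 2 * real k)^(2*k)"
  using assms
proof (induction k arbitrary: N x)
  case 0 then show ?case by simp
next
  case (Suc k)
  show ?case
  proof (cases "N < 2")
    case True
    then show ?thesis using Suc.prems by (simp add: ee_nonneg)
  next
    case False
    define B where "B = x + a + real N - 2 * real (Suc k)"
    have B0: "0 < B" using Suc.prems unfolding B_def by simp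
    define D where "D = (x + a + real N - 2) * (x + a + real N - 1)"
    have DB: "B^2 \<le> D" unfolding D_def power2_eq_square
      using B0 by (intro mult_mono) (auto simp: B_def)
    have tm: "(x + real j) * cc a k (N-2-j) (x + real j) \<le> (x + real j) * ee k (x + real j + 1) (N - 1 - 1 - j) / B^(2*k)"
      if j: "j < N - 1" for j
    proof -
      have cN: "real (N-2-j) = real N - 2 - real j" using j False by (simp add: of_nat_diff)
      have "cc a k (N-2-j) (x + real j) \<le> ee k (x + real j) (N-2-j-1) / (x + real j + a + real (N-2-j) - 2 * real k)^(2*k)"
        using Suc.prems by (intro Suc.IH) (auto simp: cN)
      also have "(x + real j + a + real (N-2-j) - 2 * real k) = B" unfolding cN B_def by simp
      also have "ee k (x + real j) (N-2-j-1) \<le> ee k (x + real j + 1) (N - 1 - 1 - j)"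
        using Suc.prems by (intro order.trans[OF ee_mono_y ee_mono_L]) auto
      finally have "cc a k (N-2-j) (x + real j) \<le> ee k (x + real j + 1) (N - 1 - 1 - j) / B^(2*k)"
        using B0 by (simp add: divide_right_mono)
      then show ?thesis using Suc.prems by (simp add: mult_left_mono times_divide_eq_right[symmetric] del: times_divide_eq_right)
    qed
    have "(\<Sum>j<N-1. (x + real j) * cc a k (N-2-j) (x + real j)) \<le> (\<Sum>j<N-1. (x + real j) * ee k (x + real j + 1) (N - 1 - 1 - j) / B^(2*k))"
      using tm by (intro sum_mono) auto
    also have "\<dots> = ee (Suc k) x (N-1) / B^(2*k)"
      unfolding ee_sum sum_divide_distrib by simp
    finally have S: "(\<Sum>j<N-1. (x + real j) * cc a k (N-2-j) (x + real j)) \<le> ee (Suc k) x (N-1) / B^(2*k)" .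
    have D0: "0 < D" using DB B0 by (smt (verit) zero_less_power)
    have "cc a (Suc k) N x = (\<Sum>j<N-1. (x + real j) * cc a k (N-2-j) (x + real j)) / D"
      using False by (simp add: D_def)
    also have "\<dots> \<le> (ee (Suc k) x (N-1) / B^(2*k)) / D"
      using S D0 by (intro divide_right_mono) auto
    also have "\<dots> \<le> (ee (Suc k) x (N-1) / B^(2*k)) / B^2"
      using DB B0 D0 Suc.prems by (intro divide_left_mono) (auto intro!: divide_nonneg_pos ee_nonneg)
    also have "\<dots> = ee (Suc k) x (N-1) / B^(2 * Suc k)"
      by (simp add: power_add power2_eq_square mult.assoc)
    finally show ?thesis unfolding B_def .
  qed
qed

lemma cc_lower:
  assumes "0 \<le> x" "0 < a"
  shows "ee k x (N+1-2*k) / (x + a + real N)^(2*k) \<le> cc a k N x"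
  using assms
proof (induction k arbitrary: N x)
  case 0 then show ?case by simp
next
  case (Suc k)
  show ?case
  proof (cases "N < 2")
    case True
    then have "N + 1 - 2 * Suc k = 0" by simp
    then show ?thesis using Suc.prems cc_nonneg[of x a "Suc k" N] by simp
  next
    case False
    define C where "C = x + a + real N - 2"
    have C0: "0 < C" using Suc.prems False unfolding C_def by simp
    define D where "D = (x + a + real N - 2) * (x + a + real N - 1)"
    have D0: "0 < D" using C0 unfolding D_def C_def by simp
    define L where "L = N + 1 - 2 * Suc k"
    have LN: "L \<le> N - 1" unfolding L_def by simp
    have tm: "(x + real j) * ee k (x + real j + 1) (L - 1 - j) \<le> C^(2*k) * ((x + real j) * cc a k (N-2-j) (x + real j))"
      if j: "j < L" for j
    proof -
      have cN: "real (N-2-j) = real N - 2 - real j" using j LN False by (simp add: of_nat_diff)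
      have "ee k (x + real j + 1) (L - 1 - j) \<le> ee k (x + real j) (Suc (L - 1 - j))"
        using Suc.prems by (intro ee_shift) auto
      also have "Suc (L - 1 - j) = N - 2 - j + 1 - 2 * k" using j unfolding L_def by simp
      also have "ee k (x + real j) (N - 2 - j + 1 - 2 * k) \<le> C^(2*k) * cc a k (N-2-j) (x + real j)"
      proof -
        have "ee k (x + real j) (N - 2 - j + 1 - 2 * k) / (x + real j + a + real (N-2-j))^(2*k) \<le> cc a k (N-2-j) (x + real j)"
          using Suc.prems by (intro Suc.IH) auto
        also have "x + real j + a + real (N-2-j) = C" unfolding cN C_def by simp
        finally show ?thesis using C0 by (simp add: divide_le_eq mult.commute)
      qed
      finally show ?thesis using Suc.prems by (simp add: mult_left_mono mult.left_commute)
    qed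
    have "ee (Suc k) x L \<le> (\<Sum>j<L. C^(2*k) * ((x + real j) * cc a k (N-2-j) (x + real j)))"
      unfolding ee_sum using tm by (intro sum_mono) (simp add: algebra_simps)
    also have "\<dots> \<le> (\<Sum>j<N-1. C^(2*k) * ((x + real j) * cc a k (N-2-j) (x + real j)))"
      using LN Suc.prems C0 by (intro sum_mono2) (auto intro!: mult_nonneg_nonneg cc_nonneg)
    also have "\<dots> = C^(2*k) * (\<Sum>j<N-1. (x + real j) * cc a k (N-2-j) (x + real j))"
      by (simp add: sum_distrib_left)
    also have "\<dots> = C^(2*k) * D * cc a (Suc k) N x"
    proof -
      have "D * cc a (Suc k) N x = (\<Sum>j<N-1. (x + real j) * cc a k (N-2-j) (x + real j))"
        using False C0 by (simp add: D_def C_def)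
      then show ?thesis by (simp add: mult.assoc)
    qed
    also have "\<dots> \<le> (x + a + real N)^(2 * Suc k) * cc a (Suc k) N x"
    proof (rule mult_right_mono)
      have "C^(2*k) * D \<le> (x + a + real N)^(2*k) * (x + a + real N)^2"
        unfolding D_def C_def power2_eq_square using C0 Suc.prems
        by (intro mult_mono power_mono) (auto simp: C_def)
      then show "C^(2*k) * D \<le> (x + a + real N)^(2 * Suc k)" by (simp add: power_add power2_eq_square mult_ac)
    qed (use Suc.prems cc_nonneg[of x a "Suc k" N] in auto)
    finally have "ee (Suc k) x L \<le> (x + a + real N)^(2 * Suc k) * cc a (Suc k) N x" .
    moreover have "0 < x + a + real N" using Suc.prems by simp
    ultimately show ?thesis unfolding L_def by (simp add: divide_le_eq mult.commute)
  qed
qed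

lemma max_div: "0 < c \<Longrightarrow> max 0 (t / c) = max 0 t / (c::real)"
  by (auto simp: max_def zero_le_divide_iff)

lemma cc_limit:
  assumes x: "0 < x" and a: "0 < a"
  shows "(\<lambda>N. cc a k N x) \<longlonglongrightarrow> (1/2)^k / fact k"
proof -
  define r1 where "r1 N = ss x (N-1) / (x + a + real N - 2 * real k)^2" for N
  define r2 where "r2 N = (ss x (N+1-2*k) - real k * (x + real (N+1-2*k))) / (x + a + real N)^2" for N
  have "r1 \<longlonglongrightarrow> 1/2"
  proof (rule Lim_transform_eventually[OF lim_r1[of x a k]])
    show "\<forall>\<^sub>F N in sequentially. ((real N - 1) * x + (real N - 1) * (real N - 1 - 1) / 2) / (x + a + real N - 2 * real k)\<^sup>2 = r1 N"
      using eventually_ge_at_top[of 1] by eventually_elim (auto simp: r1_def ss_def of_nat_diff)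
  qed
  then have lim1: "(\<lambda>N. (r1 N)^k / fact k) \<longlonglongrightarrow> (1/2)^k / fact k"
    by (intro tendsto_intros) auto
  have "r2 \<longlonglongrightarrow> 1/2"
  proof (rule Lim_transform_eventually[OF lim_r2[of k x a]])
    show "\<forall>\<^sub>F N in sequentially. ((real N + 1 - 2 * real k) * x + (real N + 1 - 2 * real k) * (real N + 1 - 2 * real k - 1) / 2
     - real k * (x + (real N + 1 - 2 * real k))) / (x + a + real N)^2 = r2 N"
      using eventually_ge_at_top[of "2*k"] by eventually_elim (auto simp: r2_def ss_def of_nat_diff algebra_simps)
  qed
  then have "(\<lambda>N. max 0 (r2 N)) \<longlonglongrightarrow> max 0 (1/2)"
    by (intro tendsto_intros)
  then have lim2: "(\<lambda>N. (max 0 (r2 N))^k / fact k) \<longlonglongrightarrow> (1/2)^k / fact k"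
    by (intro tendsto_intros) auto
  have ev1: "\<forall>\<^sub>F N in sequentially. (max 0 (r2 N))^k / fact k \<le> cc a k N x"
  proof (intro always_eventually allI)
    fix N
    have c0: "0 < (x + a + real N)^2" using x a by simp
    have "(max 0 (r2 N))^k / fact k = (max 0 (ss x (N+1-2*k) - real k * (x + real (N+1-2*k))))^k / fact k / ((x + a + real N)^2)^k"
    proof -
      have "max 0 (r2 N) = max 0 (ss x (N+1-2*k) - real k * (x + real (N+1-2*k))) / (x + a + real N)^2"
        unfolding r2_def using c0 by (rule max_div)
      then show ?thesis by (simp add: power_divide)
    qed
    also have "\<dots> \<le> ee k x (N+1-2*k) / ((x + a + real N)^2)^k"
      using x c0 by (intro divide_right_mono ee_lower) auto
    also have "\<dots> \<le> cc a k N x"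
      using cc_lower[of x a k N] x a by (simp add: power_mult)
    finally show "(max 0 (r2 N))^k / fact k \<le> cc a k N x" .
  qed
  have ev2: "\<forall>\<^sub>F N in sequentially. cc a k N x \<le> (r1 N)^k / fact k"
    using eventually_ge_at_top[of "2*k+1"]
  proof eventually_elim
    case (elim N)
    have B0: "0 < x + a + real N - 2 * real k" using elim x a by simp
    have "cc a k N x \<le> ee k x (N-1) / (x + a + real N - 2 * real k)^(2*k)"
      using x a elim by (intro cc_upper) auto
    also have "\<dots> \<le> (ss x (N-1))^k / fact k / (x + a + real N - 2 * real k)^(2*k)"
      using x B0 by (intro divide_right_mono ee_upper) auto
    also have "\<dots> = (r1 N)^k / fact k"
      unfolding r1_def by (simp add: power_divide power_mult)
    finally show ?case .
  qed
  show ?thesis using tendsto_sandwich[OF ev1 ev2 lim2 lim1] .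
qed

lemma alt_choose: "(\<Sum>i\<le>M. (-1)^i * real (Suc m choose i)) = (-1)^M * real (m choose M)"
proof (induction M)
  case (Suc M)
  then show ?case by (simp add: algebra_simps)
qed simp

definition bonf :: "nat \<Rightarrow> nat \<Rightarrow> nat \<Rightarrow> real" where
  "bonf j M a = (\<Sum>i\<le>M. (-1)^i * real (j+i choose j) * real (a choose (j+i)))"

lemma bonf_sign: "0 \<le> (-1)^M * (bonf j M a - (if a = j then 1 else 0))"
proof (cases "j \<le> a")
  case False
  then have "bonf j M a = 0" unfolding bonf_def by (intro sum.neutral) auto
  then show ?thesis using False by simp
next
  case True
  note ja = True
  have cm: "real (j+i choose j) * real (a choose (j+i)) = real (a choose j) * real ((a - j) choose i)" for i
  proof (cases "j + i \<le> a")
    case True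
    then show ?thesis using choose_mult[of j "j+i" a] by (simp flip: of_nat_mult add: mult.commute)
  next
    case False
    have e1: "a choose (j+i) = 0" and e2: "(a-j) choose i = 0" using ja False by (auto intro: binomial_eq_0)
    show ?thesis unfolding e1 e2 by simp
  qed
  have b: "bonf j M a = real (a choose j) * (\<Sum>i\<le>M. (-1)^i * real ((a - j) choose i))"
    unfolding bonf_def sum_distrib_left by (intro sum.cong) (auto simp: mult.assoc cm mult.left_commute)
  show ?thesis
  proof (cases "a = j")
    case True
    have "(\<Sum>i\<le>M. (-1)^i * real ((a - j) choose i)) = 1"
      using True by (simp add: sum.atMost_shift)
    then show ?thesis using True b by simp
  next
    case False
    then obtain m where m: "a - j = Suc m" using True by (cases "a - j") auto
    have "(-1)^M * (bonf j M a - (if a = j then 1 else 0)) = real (a choose j) * ((-1)^M * (-1)^M) * real (m choose M)"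
      using False b by (simp add: m alt_choose mult_ac)
    also have "\<dots> \<ge> 0" by (simp flip: power_add)
    finally show ?thesis by simp
  qed
qed

lemma aux_frac: "(F::real) \<noteq> 0 \<Longrightarrow> fj \<noteq> 0 \<Longrightarrow> fi \<noteq> 0 \<Longrightarrow> (-1)^i * (F / (fj * fi)) * (h^j * h^i / F) = h^j / fj * (((-1)^i * h^i) / fi)"
  by (simp add: field_simps)

lemma exp_sums_real: "(\<lambda>n. (x::real)^n / fact n) sums exp x"
  using exp_converges[of "x::real"] by (simp add: divide_inverse_commute)

lemma poisson_lim:
  fixes P :: "nat \<Rightarrow> real" and m :: "nat \<Rightarrow> nat \<Rightarrow> real"
  assumes bon: "\<And>N M. 0 \<le> (-1)^M * ((\<Sum>i\<le>M. (-1)^i * real (j+i choose j) * m N (j+i)) - P N)"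
    and mom: "\<And>k. (\<lambda>N. m N k) \<longlonglongrightarrow> (1/2)^k / fact k"
  shows "P \<longlonglongrightarrow> (1/2)^j / fact j * exp (-1/2)"
proof -
  define p where "p = (1/2::real)^j / fact j * exp (-1/2)"
  define T where "T M = (\<Sum>i\<le>M. (-1)^i * real (j+i choose j) * ((1/2)^(j+i) / fact (j+i)))" for M
  define S where "S N M = (\<Sum>i\<le>M. (-1)^i * real (j+i choose j) * m N (j+i))" for N M
  have T_eq: "T M = (1/2)^j / fact j * (\<Sum>i<Suc M. (-1/2)^i / fact i)" for M
  proof -
    have "(-1)^i * real (j+i choose j) * ((1/2)^(j+i) / fact (j+i)) = (1/2)^j / fact j * ((-1/2)^i / fact i)" for i
    proof -
      have C: "real (j+i choose j) = fact (j+i) / (fact j * fact i)"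
        using binomial_fact[of j "j+i", where 'a=real] by simp
      have F: "(fact (j+i) :: real) \<noteq> 0" "(fact j :: real) \<noteq> 0" "(fact i :: real) \<noteq> 0" by auto
      have "(-1)^i * real (j+i choose j) * ((1/2)^(j+i) / fact (j+i))
          = (-1)^i * (fact (j+i) / (fact j * fact i)) * ((1/2)^j * (1/2)^i / fact (j+i))"
        unfolding C power_add by simp
      also have "\<dots> = (1/2)^j / fact j * (((-1)^i * (1/2)^i) / fact i)"
        using F by (rule aux_frac)
      also have "(-1::real)^i * (1/2)^i = (-1/2)^i" by (simp add: power_mult_distrib[symmetric])
      finally show ?thesis .
    qed
    then show ?thesis unfolding T_def sum_distrib_left lessThan_Suc_atMost by (intro sum.cong) auto
  qed
  have "(\<lambda>n. (-1/2::real)^n / fact n) sums exp(-1/2)"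
    by (rule exp_sums_real)
  then have "(\<lambda>n. (\<Sum>i<n. (-1/2::real)^i / fact i)) \<longlonglongrightarrow> exp (-1/2)"
    unfolding sums_def .
  then have "(\<lambda>M. (\<Sum>i<Suc M. (-1/2::real)^i / fact i)) \<longlonglongrightarrow> exp (-1/2)"
    by (rule LIMSEQ_Suc)
  then have "(\<lambda>M. (1/2)^j / fact j * (\<Sum>i<Suc M. (-1/2::real)^i / fact i)) \<longlonglongrightarrow> p"
    unfolding p_def by (intro tendsto_mult tendsto_const)
  moreover have "T = (\<lambda>M. (1/2)^j / fact j * (\<Sum>i<Suc M. (-1/2::real)^i / fact i))"
    using T_eq by auto
  ultimately have T_lim: "T \<longlonglongrightarrow> p" by simp
  have S_lim: "(\<lambda>N. S N M) \<longlonglongrightarrow> T M" for M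
    unfolding S_def T_def by (intro tendsto_intros mom)
  show ?thesis
    unfolding p_def[symmetric] LIMSEQ_iff real_norm_def
  proof (intro allI impI)
    fix r :: real assume r: "0 < r"
    have r2: "0 < r/2" using r by simp
    obtain M0 where M0: "\<And>M. M \<ge> M0 \<Longrightarrow> \<bar>T M - p\<bar> < r/2"
      using LIMSEQ_D[OF T_lim r2] by auto
    obtain N1 where N1: "\<And>N. N \<ge> N1 \<Longrightarrow> \<bar>S N (2*M0) - T (2*M0)\<bar> < r/2"
      using LIMSEQ_D[OF S_lim[of "2*M0"] r2] by auto
    obtain N2 where N2: "\<And>N. N \<ge> N2 \<Longrightarrow> \<bar>S N (2*M0+1) - T (2*M0+1)\<bar> < r/2"
      using LIMSEQ_D[OF S_lim[of "2*M0+1"] r2] by auto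
    show "\<exists>no. \<forall>n\<ge>no. \<bar>P n - p\<bar> < r"
    proof (intro exI allI impI)
      fix N assume N: "N \<ge> max N1 N2"
      have e: "P N \<le> S N (2*M0)" using bon[where N=N and M="2*M0"] unfolding S_def by (simp add: power_mult)
      have o: "S N (2*M0+1) \<le> P N" using bon[where N=N and M="2*M0+1"] unfolding S_def by (simp add: power_mult)
      have a1: "\<bar>T (2*M0) - p\<bar> < r/2" "\<bar>T (2*M0+1) - p\<bar> < r/2" using M0 by auto
      have a2: "\<bar>S N (2*M0) - T (2*M0)\<bar> < r/2" "\<bar>S N (2*M0+1) - T (2*M0+1)\<bar> < r/2"
        using N1[of N] N2[of N] N by auto
      show "\<bar>P N - p\<bar> < r" using e o a1 a2 unfolding abs_less_iff by linarith
    qed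
  qed
qed

lemma cc_step:
  "cc a (Suc k) (Suc (Suc N)) x = cc a (Suc k) (Suc N) (x + 1) + x * cc a k N x / ((x + a + real N) * (x + a + real N + 1))"
proof -
  define D where "D = (x + a + real N) * (x + a + real N + 1)"
  define S' where "S' = (\<Sum>j<N. (x + 1 + real j) * cc a k (N - 1 - j) (x + 1 + real j))"
  have L: "cc a (Suc k) (Suc (Suc N)) x = (x * cc a k N x + S') / D"
  proof -
    have "(\<Sum>j<Suc (Suc N) - 1. (x + real j) * cc a k (Suc (Suc N) - 2 - j) (x + real j)) = x * cc a k N x + S'"
    proof -
      have e: "Suc (Suc N) - 1 = Suc N" by simp
      have "(\<Sum>j<Suc N. (x + real j) * cc a k (Suc (Suc N) - 2 - j) (x + real j))
         = (x + real 0) * cc a k (Suc (Suc N) - 2 - 0) (x + real 0) + (\<Sum>j<N. (x + real (Suc j)) * cc a k (Suc (Suc N) - 2 - Suc j) (x + real (Suc j)))"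
        by (rule sum.lessThan_Suc_shift)
      also have "(\<Sum>j<N. (x + real (Suc j)) * cc a k (Suc (Suc N) - 2 - Suc j) (x + real (Suc j))) = S'"
        unfolding S'_def by (intro sum.cong) (auto simp: algebra_simps)
      finally show ?thesis unfolding e by simp
    qed
    moreover have "(x + a + real (Suc (Suc N)) - 2) * (x + a + real (Suc (Suc N)) - 1) = D"
      unfolding D_def by (simp add: algebra_simps)
    ultimately show ?thesis by simp
  qed
  have R: "cc a (Suc k) (Suc N) (x + 1) = S' / D"
  proof (cases N)
    case 0 then show ?thesis by (simp add: S'_def)
  next
    case (Suc M)
    have "(x + 1 + a + real (Suc N) - 2) * (x + 1 + a + real (Suc N) - 1) = D"
      unfolding D_def by (simp add: algebra_simps)
    moreover have "(\<Sum>j<Suc N - 1. (x + 1 + real j) * cc a k (Suc N - 2 - j) (x + 1 + real j)) = S'"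
      unfolding S'_def using Suc by (intro sum.cong) auto
    ultimately show ?thesis using Suc by simp
  qed
  show ?thesis unfolding L R D_def[symmetric] by (simp add: add_divide_distrib)
qed



lemma finite_cell_UNIV: "finite (UNIV :: cell set)"
proof -
  have "(UNIV :: cell set) = {Empty, Alpha, Beta}" using cell.exhaust by auto
  then show ?thesis by (metis finite.emptyI finite_insert)
qed

lemma finite_supp:
  assumes "finite X"
  shows "finite {c :: 'a \<Rightarrow> cell. \<forall>i. i \<notin> X \<longrightarrow> c i = Empty}"
proof -
  let ?S = "{c :: 'a \<Rightarrow> cell. \<forall>i. i \<notin> X \<longrightarrow> c i = Empty}"
  have inj: "inj_on (\<lambda>c. restrict c X) ?S"
  proof (rule inj_onI)
    fix c d assume "c \<in> ?S" "d \<in> ?S" "restrict c X = restrict d X"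
    then show "c = d" by (auto simp: fun_eq_iff restrict_def split: if_splits) (metis)
  qed
  have sub: "(\<lambda>c. restrict c X) ` ?S \<subseteq> PiE X (\<lambda>_. UNIV)" by (auto simp: PiE_def)
  have fin: "finite (PiE X (\<lambda>_. UNIV :: cell set))"
    using assms finite_cell_UNIV by (intro finite_PiE) auto
  have "finite ((\<lambda>c. restrict c X) ` ?S)" by (rule finite_subset[OF sub fin])
  then show ?thesis by (rule finite_imageD[OF _ inj])
qed

lemma finite_boxes: "finite {b. is_box n b}"
proof -
  have "{b. is_box n b} \<subseteq> {0..n+1} \<times> {0..n+1}" by (auto simp: is_box_def)
  then show ?thesis by (rule finite_subset) auto
qed

lemma finite_staircase: "finite (staircase n)"
proof -
  have "staircase n \<subseteq> {c. \<forall>b. b \<notin> {b. is_box n b} \<longrightarrow> c b = Empty}"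
    unfolding staircase_def by auto
  then show ?thesis using finite_supp[OF finite_boxes] by (rule finite_subset)
qed

definition glue :: "(nat \<Rightarrow> cell) \<Rightarrow> (nat \<times> nat \<Rightarrow> cell) \<Rightarrow> (nat \<times> nat \<Rightarrow> cell)" where
  "glue c T = (\<lambda>(i,j). if j = 0 then Empty else if j = 1 then c i else T (i, j - 1))"

definition freeR :: "nat \<Rightarrow> (nat \<times> nat \<Rightarrow> cell) \<Rightarrow> nat set" where
  "freeR n T = {i. 1 \<le> i \<and> i \<le> n \<and> (\<forall>j. T (i,j) \<noteq> Beta)}"

definition cols :: "nat \<Rightarrow> nat set \<Rightarrow> (nat \<Rightarrow> cell) set" where
  "cols n R = {c. (\<forall>i. i \<notin> R \<and> i \<noteq> Suc n \<longrightarrow> c i = Empty) \<and> c (Suc n) \<noteq> Empty \<and>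
                  (\<forall>i. c i = Alpha \<longrightarrow> (\<forall>i'<i. c i' = Empty))}"

lemma freeR_sub: "freeR n T \<subseteq> {1..n}"
  unfolding freeR_def by auto

lemma st_D:
  assumes "T \<in> staircase n"
  shows st_empty: "\<And>b. \<not> is_box n b \<Longrightarrow> T b = Empty"
    and st_alpha: "\<And>i j i'. is_box n (i, j) \<Longrightarrow> T (i, j) = Alpha \<Longrightarrow> 1 \<le> i' \<Longrightarrow> i' < i \<Longrightarrow> T (i', j) = Empty"
    and st_beta: "\<And>i j j'. is_box n (i, j) \<Longrightarrow> T (i, j) = Beta \<Longrightarrow> 1 \<le> j' \<Longrightarrow> j' < j \<Longrightarrow> T (i, j') = Empty"
    and st_diag: "\<And>i j. is_box n (i, j) \<Longrightarrow> i + j = n + 1 \<Longrightarrow> T (i, j) \<noteq> Empty"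
  using assms unfolding staircase_def mem_Collect_eq by blast+

lemma st_nonempty_box: "T \<in> staircase n \<Longrightarrow> T b \<noteq> Empty \<Longrightarrow> is_box n b"
  using st_empty by blast

lemma glue_in:
  assumes T: "T \<in> staircase n" and c: "c \<in> cols n (freeR n T)"
  shows "glue c T \<in> staircase (Suc n)"
proof -
  have T1: "\<And>b. \<not> is_box n b \<Longrightarrow> T b = Empty"
    and T2: "\<And>i j i'. is_box n (i, j) \<Longrightarrow> T (i, j) = Alpha \<Longrightarrow> 1 \<le> i' \<Longrightarrow> i' < i \<Longrightarrow> T (i', j) = Empty"
    and T3: "\<And>i j j'. is_box n (i, j) \<Longrightarrow> T (i, j) = Beta \<Longrightarrow> 1 \<le> j' \<Longrightarrow> j' < j \<Longrightarrow> T (i, j') = Empty"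
    and T4: "\<And>i j. is_box n (i, j) \<Longrightarrow> i + j = n + 1 \<Longrightarrow> T (i, j) \<noteq> Empty"
    using st_D[OF T] by blast+
  have c1: "\<And>i. i \<notin> freeR n T \<Longrightarrow> i \<noteq> Suc n \<Longrightarrow> c i = Empty"
    and c2: "c (Suc n) \<noteq> Empty"
    and c3: "\<And>i i'. c i = Alpha \<Longrightarrow> i' < i \<Longrightarrow> c i' = Empty"
    using c unfolding cols_def by auto
  show ?thesis unfolding staircase_def
  proof (intro CollectI conjI allI impI)
    fix b assume b: "\<not> is_box (Suc n) b"
    obtain i j where bij: "b = (i,j)" by (cases b)
    show "glue c T b = Empty"
    proof (cases "j = 0 \<or> j = 1")
      case True
      then show ?thesis using b c1[of i] unfolding bij glue_def freeR_def is_box_def by auto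
    next
      case False
      then have "\<not> is_box n (i, j-1)" using b unfolding bij is_box_def by auto
      then show ?thesis using False T1[of "(i, j-1)"] unfolding bij glue_def by auto
    qed
  next
    fix i j i' assume h: "is_box (Suc n) (i, j) \<and> glue c T (i, j) = Alpha" and i': "1 \<le> i' \<and> i' < i"
    show "glue c T (i', j) = Empty"
    proof (cases "j = 1")
      case True then show ?thesis using h i' c3 unfolding glue_def by auto
    next
      case False
      then have j2: "j \<ge> 2" using h unfolding is_box_def by auto
      then have bx: "is_box n (i, j-1)" "T (i, j-1) = Alpha" using h unfolding is_box_def glue_def by auto
      have "T (i', j-1) = Empty" using T2[OF bx] i' by auto
      then show ?thesis using j2 unfolding glue_def by auto
    qed
  next
    fix i j j' assume h: "is_box (Suc n) (i, j) \<and> glue c T (i, j) = Beta" and j': "1 \<le> j' \<and> j' < j"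
    then have j2: "j \<ge> 2" unfolding glue_def by (auto split: if_splits)
    have b: "is_box n (i, j-1)" "T (i, j-1) = Beta" using h j2 unfolding glue_def is_box_def by auto
    show "glue c T (i, j') = Empty"
    proof (cases "j' = 1")
      case True
      have "i \<notin> freeR n T" using b unfolding freeR_def by auto
      moreover have "i \<noteq> Suc n" using b unfolding is_box_def by auto
      ultimately show ?thesis using True c1 unfolding glue_def by auto
    next
      case False
      have "T (i, j'-1) = Empty" using T3[OF b, of "j'-1"] j' False by auto
      then show ?thesis using j' False unfolding glue_def by auto
    qed
  next
    fix i j assume h: "is_box (Suc n) (i, j) \<and> i + j = Suc n + 1"
    show "glue c T (i, j) \<noteq> Empty"
    proof (cases "j = 1")
      case True then show ?thesis using h c2 unfolding glue_def by auto
    next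
      case False
      then have j2: "j \<ge> 2" using h unfolding is_box_def by auto
      then have bx: "is_box n (i, j-1)" "i + (j-1) = n+1" using h unfolding is_box_def by auto
      then show ?thesis using j2 T4[OF bx] unfolding glue_def by auto
    qed
  qed
qed

definition restT :: "(nat \<times> nat \<Rightarrow> cell) \<Rightarrow> (nat \<times> nat \<Rightarrow> cell)" where
  "restT S = (\<lambda>(i,j). if j = 0 then Empty else S (i, Suc j))"

definition colT :: "(nat \<times> nat \<Rightarrow> cell) \<Rightarrow> (nat \<Rightarrow> cell)" where
  "colT S = (\<lambda>i. S (i, 1))"

lemma unglue:
  assumes S: "S \<in> staircase (Suc n)"
  shows "restT S \<in> staircase n" "colT S \<in> cols n (freeR n (restT S))" "glue (colT S) (restT S) = S"
proof -
  have S1: "\<And>b. \<not> is_box (Suc n) b \<Longrightarrow> S b = Empty"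
    and S2: "\<And>i j i'. is_box (Suc n) (i, j) \<Longrightarrow> S (i, j) = Alpha \<Longrightarrow> 1 \<le> i' \<Longrightarrow> i' < i \<Longrightarrow> S (i', j) = Empty"
    and S3: "\<And>i j j'. is_box (Suc n) (i, j) \<Longrightarrow> S (i, j) = Beta \<Longrightarrow> 1 \<le> j' \<Longrightarrow> j' < j \<Longrightarrow> S (i, j') = Empty"
    and S4: "\<And>i j. is_box (Suc n) (i, j) \<Longrightarrow> i + j = Suc n + 1 \<Longrightarrow> S (i, j) \<noteq> Empty"
    using st_D[OF S] by blast+
  show "glue (colT S) (restT S) = S"
  proof (rule ext)
    fix b show "glue (colT S) (restT S) b = S b"
    proof (cases b)
      case (Pair i j)
      show ?thesis
      proof (cases "j = 0")
        case True
        then show ?thesis using S1[of b] unfolding Pair glue_def is_box_def by auto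
      next
        case False
        then show ?thesis unfolding Pair glue_def restT_def colT_def by auto
      qed
    qed
  qed
  show R: "restT S \<in> staircase n" unfolding staircase_def
  proof (intro CollectI conjI allI impI)
    fix b assume "\<not> is_box n b"
    then show "restT S b = Empty" using S1 unfolding restT_def is_box_def by (auto split: prod.splits)
  next
    fix i j i' assume "is_box n (i, j) \<and> restT S (i, j) = Alpha" "1 \<le> i' \<and> i' < i"
    then show "restT S (i', j) = Empty" using S2[of i "Suc j" i'] unfolding restT_def is_box_def by auto
  next
    fix i j j' assume "is_box n (i, j) \<and> restT S (i, j) = Beta" "1 \<le> j' \<and> j' < j"
    then show "restT S (i, j') = Empty" using S3[of i "Suc j" "Suc j'"] unfolding restT_def is_box_def by auto
  next
    fix i j assume "is_box n (i, j) \<and> i + j = n + 1"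
    then show "restT S (i, j) \<noteq> Empty" using S4[of i "Suc j"] unfolding restT_def is_box_def by auto
  qed
  show "colT S \<in> cols n (freeR n (restT S))" unfolding cols_def
  proof (intro CollectI conjI allI impI)
    fix i assume i: "i \<notin> freeR n (restT S) \<and> i \<noteq> Suc n"
    show "colT S i = Empty"
    proof (cases "1 \<le> i \<and> i \<le> n")
      case True
      then obtain j where j: "restT S (i, j) = Beta" using i unfolding freeR_def by auto
      then have j1: "j \<ge> 1" "S (i, Suc j) = Beta" unfolding restT_def by (auto split: if_splits)
      then have "is_box (Suc n) (i, Suc j)" using S1 by (metis cell.distinct(4))
      then show ?thesis using S3[of i "Suc j" 1] j1 unfolding colT_def by auto
    next
      case False
      then show ?thesis using i S1[of "(i,1)"] unfolding colT_def is_box_def by auto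
    qed
  next
    show "colT S (Suc n) \<noteq> Empty" using S4[of "Suc n" 1] unfolding colT_def is_box_def by auto
  next
    fix i i' assume h: "colT S i = Alpha" "i' < i"
    then have "is_box (Suc n) (i, 1)" using S1 unfolding colT_def by (metis cell.distinct(1))
    then show "colT S i' = Empty" using h S2[of i 1 i'] S1[of "(0,1)"] unfolding colT_def is_box_def
      by (cases "i' = 0") auto
  qed
qed

lemma glue_inj:
  assumes "T \<in> staircase n" "T' \<in> staircase n" "glue c T = glue c' T'"
  shows "c = c'" "T = T'"
proof -
  show "c = c'"
  proof (rule ext)
    fix i show "c i = c' i" using fun_cong[OF assms(3), of "(i,1)"] unfolding glue_def by simp
  qed
  show "T = T'"
  proof (rule ext)
    fix b show "T b = T' b"
    proof (cases b)
      case (Pair i j)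
      show ?thesis
      proof (cases "j = 0")
        case True
        then show ?thesis using st_empty[OF assms(1), of b] st_empty[OF assms(2), of b] unfolding Pair is_box_def by auto
      next
        case False
        then show ?thesis using fun_cong[OF assms(3), of "(i, Suc j)"] unfolding Pair glue_def by simp
      qed
    qed
  qed
qed

lemma staircase_Suc:
  "staircase (Suc n) = (\<lambda>(T,c). glue c T) ` (SIGMA T:staircase n. cols n (freeR n T))"
proof
  show "staircase (Suc n) \<subseteq> (\<lambda>(T,c). glue c T) ` (SIGMA T:staircase n. cols n (freeR n T))"
  proof
    fix S assume S: "S \<in> staircase (Suc n)"
    then show "S \<in> (\<lambda>(T,c). glue c T) ` (SIGMA T:staircase n. cols n (freeR n T))"
      using unglue[OF S] by (intro image_eqI[of _ _ "(restT S, colT S)"]) auto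
  qed
qed (auto intro: glue_in)

lemma staircase_Suc_inj: "inj_on (\<lambda>(T,c). glue c T) (SIGMA T:staircase n. cols n (freeR n T))"
  by (rule inj_onI) (auto dest: glue_inj)

lemma cols_supp: "c \<in> cols n R \<Longrightarrow> c i \<noteq> Empty \<Longrightarrow> i \<in> insert (Suc n) R"
  unfolding cols_def by auto

lemma finite_cols: "finite R \<Longrightarrow> finite (cols n R)"
proof -
  assume "finite R"
  then have "finite {c :: nat \<Rightarrow> cell. \<forall>i. i \<notin> insert (Suc n) R \<longrightarrow> c i = Empty}"
    by (intro finite_supp) auto
  moreover have "cols n R \<subseteq> {c :: nat \<Rightarrow> cell. \<forall>i. i \<notin> insert (Suc n) R \<longrightarrow> c i = Empty}"
    unfolding cols_def by auto
  ultimately show ?thesis by (rule finite_subset[rotated])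
qed

lemma finite_freeR: "finite (freeR n T)"
  using freeR_sub[of n T] by (rule finite_subset) auto

lemma num_sym_glue:
  assumes T: "T \<in> staircase n" and c: "c \<in> cols n (freeR n T)" and v: "v \<noteq> Empty"
  shows "num_sym (Suc n) v (glue c T) = num_sym n v T + card {i. c i = v}"
proof -
  have sub: "{i. c i = v} \<subseteq> insert (Suc n) (freeR n T)" using cols_supp[OF c] v by auto
  have fin1: "finite {i. c i = v}" using finite_freeR[of n T] by (intro finite_subset[OF sub]) auto
  have fin2: "finite {b. is_box n b \<and> T b = v}" using finite_boxes[of n] by (rule finite_subset[rotated]) auto
  have eq: "{b. is_box (Suc n) b \<and> glue c T b = v} =
      (\<lambda>i. (i, 1)) ` {i. c i = v} \<union> (\<lambda>(i,j). (i, Suc j)) ` {b. is_box n b \<and> T b = v}"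
  proof (intro equalityI subsetI)
    fix b assume b: "b \<in> {b. is_box (Suc n) b \<and> glue c T b = v}"
    obtain i j where bij: "b = (i, j)" by (cases b)
    have j0: "j \<noteq> 0" using b v unfolding bij glue_def by (auto split: if_splits)
    show "b \<in> (\<lambda>i. (i, 1)) ` {i. c i = v} \<union> (\<lambda>(i,j). (i, Suc j)) ` {b. is_box n b \<and> T b = v}"
    proof (cases "j = 1")
      case True
      then show ?thesis using b unfolding bij glue_def by auto
    next
      case False
      then have Tv: "T (i, j - 1) = v" using b j0 unfolding bij glue_def by auto
      then have "is_box n (i, j-1)" using st_nonempty_box[OF T] v by auto
      then have "(i, j-1) \<in> {b. is_box n b \<and> T b = v}" using Tv by auto
      moreover have "b = (\<lambda>(i,j). (i, Suc j)) (i, j-1)" using j0 unfolding bij by auto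
      ultimately show ?thesis by blast
    qed
  next
    fix b assume b: "b \<in> (\<lambda>i. (i, 1)) ` {i. c i = v} \<union> (\<lambda>(i,j). (i, Suc j)) ` {b. is_box n b \<and> T b = v}"
    show "b \<in> {b. is_box (Suc n) b \<and> glue c T b = v}"
    proof (cases "b \<in> (\<lambda>i. (i, 1)) ` {i. c i = v}")
      case True
      then obtain i where i: "b = (i, 1)" "c i = v" by auto
      then have "i \<in> insert (Suc n) (freeR n T)" using sub by auto
      then have "is_box (Suc n) (i, 1)" using freeR_sub[of n T] unfolding is_box_def by auto
      then show ?thesis using i unfolding glue_def by auto
    next
      case False
      then obtain i j where ij: "b = (i, Suc j)" "is_box n (i, j)" "T (i, j) = v" using b by auto
      then have "j \<noteq> 0" unfolding is_box_def by auto
      then show ?thesis using ij unfolding glue_def is_box_def by auto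
    qed
  qed
  have disj: "(\<lambda>i. (i, 1)) ` {i. c i = v} \<inter> (\<lambda>(i,j). (i, Suc j)) ` {b. is_box n b \<and> T b = v} = {}"
    unfolding is_box_def by auto
  have inj1: "inj_on (\<lambda>i. (i, 1::nat)) {i. c i = v}" by (auto intro: inj_onI)
  have inj2: "inj_on (\<lambda>(i,j). (i, Suc j)) {b. is_box n b \<and> T b = v}" by (auto intro!: inj_onI)
  show ?thesis
    unfolding num_sym_def eq
    using card_Un_disjoint[OF finite_imageI[OF fin1] finite_imageI[OF fin2] disj] card_image[OF inj1] card_image[OF inj2]
    by simp
qed

lemma freeR_glue:
  assumes T: "T \<in> staircase n" and c: "c \<in> cols n (freeR n T)"
  shows "freeR (Suc n) (glue c T) = {i \<in> insert (Suc n) (freeR n T). c i \<noteq> Beta}"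
proof (intro equalityI subsetI)
  fix i assume i: "i \<in> freeR (Suc n) (glue c T)"
  then have i1: "1 \<le> i" "i \<le> Suc n" and nb: "\<And>j. glue c T (i, j) \<noteq> Beta" unfolding freeR_def by auto
  have ci: "c i \<noteq> Beta" using nb[of 1] unfolding glue_def by auto
  have "T (i, j) \<noteq> Beta" for j
  proof (cases "j = 0")
    case True
    then show ?thesis using st_empty[OF T, of "(i,j)"] unfolding is_box_def by auto
  next
    case False
    then show ?thesis using nb[of "Suc j"] unfolding glue_def by auto
  qed
  then show "i \<in> {i \<in> insert (Suc n) (freeR n T). c i \<noteq> Beta}"
    using i1 ci unfolding freeR_def by auto
next
  fix i assume i: "i \<in> {i \<in> insert (Suc n) (freeR n T). c i \<noteq> Beta}"
  then have ci: "c i \<noteq> Beta" and i1: "1 \<le> i" "i \<le> Suc n" using freeR_sub[of n T] by auto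
  have Ti: "T (i, j) \<noteq> Beta" for j
  proof (cases "i = Suc n")
    case True
    then show ?thesis using st_empty[OF T, of "(i,j)"] unfolding is_box_def by auto
  next
    case False
    then show ?thesis using i unfolding freeR_def by auto
  qed
  have "glue c T (i, j) \<noteq> Beta" for j
    using ci Ti[of "j-1"] unfolding glue_def by auto
  then show "i \<in> freeR (Suc n) (glue c T)" using i1 unfolding freeR_def by auto
qed

lemma A_glue:
  assumes T: "T \<in> staircase n" and c: "c \<in> cols n (freeR n T)"
  shows "A_count (Suc n) (glue c T) = A_count n T + (if c n = Alpha then 1 else 0)"
proof -
  have c0: "c 0 = Empty" using cols_supp[OF c, of 0] freeR_sub[of n T] by force
  have eq: "{j. 1 \<le> j \<and> j \<le> Suc n - 1 \<and> glue c T (Suc n - j, j) = Alpha}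
      = (if c n = Alpha then {1} else {}) \<union> Suc ` {j. 1 \<le> j \<and> j \<le> n - 1 \<and> T (n - j, j) = Alpha}"
  proof (intro equalityI subsetI)
    fix j assume j: "j \<in> {j. 1 \<le> j \<and> j \<le> Suc n - 1 \<and> glue c T (Suc n - j, j) = Alpha}"
    show "j \<in> (if c n = Alpha then {1} else {}) \<union> Suc ` {j. 1 \<le> j \<and> j \<le> n - 1 \<and> T (n - j, j) = Alpha}"
    proof (cases "j = 1")
      case True then show ?thesis using j unfolding glue_def by auto
    next
      case False
      then obtain j' where j': "j = Suc j'" "1 \<le> j'" using j by (cases j) auto
      then have "T (n - j', j') = Alpha" "j' \<le> n - 1" using j unfolding glue_def by auto
      then show ?thesis using j' by auto
    qed
  next
    fix j assume j: "j \<in> (if c n = Alpha then {1} else {}) \<union> Suc ` {j. 1 \<le> j \<and> j \<le> n - 1 \<and> T (n - j, j) = Alpha}"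
    show "j \<in> {j. 1 \<le> j \<and> j \<le> Suc n - 1 \<and> glue c T (Suc n - j, j) = Alpha}"
    proof (cases "j = 1")
      case True
      then have "c n = Alpha" using j by (auto split: if_splits)
      then have "n \<ge> 1" using c0 by (cases n) auto
      then show ?thesis using True \<open>c n = Alpha\<close> unfolding glue_def by auto
    next
      case False
      then obtain j' where j': "j = Suc j'" "1 \<le> j'" "j' \<le> n - 1" "T (n - j', j') = Alpha"
        using j by (auto split: if_splits)
      then show ?thesis unfolding glue_def by auto
    qed
  qed
  have fin: "finite {j. 1 \<le> j \<and> j \<le> n - 1 \<and> T (n - j, j) = Alpha}" by (rule finite_subset[of _ "{..n}"]) auto
  have disj: "(if c n = Alpha then {1} else {}) \<inter> Suc ` {j. 1 \<le> j \<and> j \<le> n - 1 \<and> T (n - j, j) = Alpha} = {}"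
    by auto
  have cS: "card (Suc ` {j. 1 \<le> j \<and> j \<le> n - 1 \<and> T (n - j, j) = Alpha}) = A_count n T"
    unfolding A_count_def by (rule card_image[OF inj_on_subset[OF inj_Suc subset_UNIV]])
  have "A_count (Suc n) (glue c T) = card ((if c n = Alpha then {1} else {}) \<union> Suc ` {j. 1 \<le> j \<and> j \<le> n - 1 \<and> T (n - j, j) = Alpha})"
    unfolding A_count_def eq ..
  also have "\<dots> = card (if c n = Alpha then {1::nat} else {}) + A_count n T"
    using card_Un_disjoint[OF _ finite_imageI[OF fin] disj] cS by auto
  finally show ?thesis by auto
qed

definition wc :: "real \<Rightarrow> real \<Rightarrow> real \<Rightarrow> cell \<Rightarrow> real" where
  "wc al be u v = (case v of Empty \<Rightarrow> u | Alpha \<Rightarrow> al * u | Beta \<Rightarrow> be)"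

lemma wc_simps[simp]: "wc al be u Empty = u" "wc al be u Alpha = al * u" "wc al be u Beta = be"
  unfolding wc_def by auto

lemma filter_insert: "x \<notin> X \<Longrightarrow> {i \<in> insert x X. P i} = (if P x then insert x {i \<in> X. P i} else {i \<in> X. P i})"
  by auto

lemma prod_wc:
  assumes "finite X"
  shows "(\<Prod>i\<in>X. wc al be u (c i)) = al ^ card {i\<in>X. c i = Alpha} * be ^ card {i\<in>X. c i = Beta} * u ^ card {i\<in>X. c i \<noteq> Beta}"
  using assms
proof (induction X rule: finite_induct)
  case (insert x X)
  have f: "finite {i\<in>X. P i}" for P using insert(1) by auto
  have n: "x \<notin> {i\<in>X. P i}" for P using insert(2) by auto
  show ?case
  proof (cases "c x")
    case Empty
    then show ?thesis using insert unfolding filter_insert[OF insert(2)] by (simp add: card_insert_disjoint[OF f n])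
  next
    case Alpha
    then show ?thesis using insert unfolding filter_insert[OF insert(2)] by (simp add: card_insert_disjoint[OF f n])
  next
    case Beta
    then show ?thesis using insert unfolding filter_insert[OF insert(2)] by (simp add: card_insert_disjoint[OF f n])
  qed
qed simp

definition Wt :: "real \<Rightarrow> real \<Rightarrow> real \<Rightarrow> nat \<Rightarrow> nat set \<Rightarrow> (nat \<Rightarrow> cell) \<Rightarrow> real" where
  "Wt al be u n R c = (\<Prod>i\<in>insert (Suc n) R. wc al be u (c i))"

lemma wt_glue:
  assumes T: "T \<in> staircase n" and c: "c \<in> cols n (freeR n T)"
  shows "wt al be (Suc n) (glue c T) * u ^ card (freeR (Suc n) (glue c T)) = wt al be n T * Wt al be u n (freeR n T) c"
proof -
  let ?X = "insert (Suc n) (freeR n T)"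
  have fX: "finite ?X" using finite_freeR by auto
  have e1: "{i\<in>?X. c i = v} = {i. c i = v}" if "v \<noteq> Empty" for v using cols_supp[OF c] that by auto
  have "Wt al be u n (freeR n T) c = al ^ card {i. c i = Alpha} * be ^ card {i. c i = Beta} * u ^ card {i\<in>?X. c i \<noteq> Beta}"
    unfolding Wt_def prod_wc[OF fX] using e1[of Alpha] e1[of Beta] by simp
  moreover have "num_sym (Suc n) Alpha (glue c T) = num_sym n Alpha T + card {i. c i = Alpha}"
    by (rule num_sym_glue[OF T c]) simp
  moreover have "num_sym (Suc n) Beta (glue c T) = num_sym n Beta T + card {i. c i = Beta}"
    by (rule num_sym_glue[OF T c]) simp
  ultimately show ?thesis
    unfolding wt_def freeR_glue[OF T c] by (simp add: power_add mult_ac)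
qed

lemma sum_glue:
  "(\<Sum>S\<in>staircase (Suc n). F S) = (\<Sum>T\<in>staircase n. \<Sum>c\<in>cols n (freeR n T). F (glue c T))"
proof -
  have "(\<Sum>S\<in>staircase (Suc n). F S) = sum (F \<circ> (\<lambda>(T,c). glue c T)) (SIGMA T:staircase n. cols n (freeR n T))"
    unfolding staircase_Suc by (rule sum.reindex[OF staircase_Suc_inj])
  also have "F \<circ> (\<lambda>(T,c). glue c T) = (\<lambda>(T,c). F (glue c T))" by (auto simp: fun_eq_iff)
  also have "sum (\<lambda>(T,c). F (glue c T)) (SIGMA T:staircase n. cols n (freeR n T)) = (\<Sum>T\<in>staircase n. \<Sum>c\<in>cols n (freeR n T). F (glue c T))"
    by (rule sum.Sigma[symmetric]) (auto simp: finite_staircase finite_cols finite_freeR)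
  finally show ?thesis .
qed

definition noA :: "nat \<Rightarrow> nat set \<Rightarrow> (nat \<Rightarrow> cell) set" where
  "noA n R = {c \<in> cols n R. \<forall>i. c i \<noteq> Alpha}"

lemma sum_split3:
  assumes "finite C"
  shows "sum f C = sum f {c\<in>C. c r = Empty} + sum f {c\<in>C. c r = Beta} + sum f {c\<in>C. c r = Alpha}"
proof -
  have C: "C = ({c\<in>C. c r = Empty} \<union> {c\<in>C. c r = Beta}) \<union> {c\<in>C. c r = Alpha}"
    using cell.exhaust by auto
  have "sum f C = sum f ({c\<in>C. c r = Empty} \<union> {c\<in>C. c r = Beta}) + sum f {c\<in>C. c r = Alpha}"
    by (subst C, rule sum.union_disjoint) (use assms in auto)
  also have "sum f ({c\<in>C. c r = Empty} \<union> {c\<in>C. c r = Beta}) = sum f {c\<in>C. c r = Empty} + sum f {c\<in>C. c r = Beta}"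
    by (rule sum.union_disjoint) (use assms in auto)
  finally show ?thesis .
qed

lemma col_sums:
  assumes "finite R"
  shows "R \<subseteq> {1..n} \<longrightarrow> (\<Sum>c\<in>cols n R. Wt al be u n R c) = (be + al * u) * (u + be) ^ card R
           \<and> (\<Sum>c\<in>noA n R. Wt al be u n R c) = be * (u + be) ^ card R"
  using assms
proof (induction R rule: finite_linorder_min_induct)
  case empty
  define ca where "ca = (\<lambda>i. if i = Suc n then Alpha else Empty)"
  define cb where "cb = (\<lambda>i. if i = Suc n then Beta else Empty)"
  have C: "cols n {} = {ca, cb}"
  proof (intro equalityI subsetI)
    fix c assume c: "c \<in> cols n {}"
    then have "c i = Empty" if "i \<noteq> Suc n" for i using that unfolding cols_def by auto
    moreover have "c (Suc n) = Alpha \<or> c (Suc n) = Beta" using c cell.exhaust unfolding cols_def by auto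
    ultimately show "c \<in> {ca, cb}" unfolding ca_def cb_def by (auto simp: fun_eq_iff)
  qed (auto simp: cols_def ca_def cb_def)
  have N: "noA n {} = {cb}" unfolding noA_def C by (auto simp: ca_def cb_def fun_eq_iff split: if_splits)
  have "ca \<noteq> cb" unfolding ca_def cb_def by (auto simp: fun_eq_iff)
  then show ?case unfolding C N Wt_def by (simp add: ca_def cb_def)
next
  case (insert r A)
  show ?case
  proof
    assume sub: "insert r A \<subseteq> {1..n}"
    then have IH1: "(\<Sum>c\<in>cols n A. Wt al be u n A c) = (be + al * u) * (u + be) ^ card A"
      and IH2: "(\<Sum>c\<in>noA n A. Wt al be u n A c) = be * (u + be) ^ card A" using insert by auto
    have rA: "r \<notin> A" using insert by auto
    have r1: "1 \<le> r" "r \<le> n" using sub by auto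
    have rX: "r \<notin> insert (Suc n) A" using rA r1 by auto
    have finA: "finite A" using insert by auto
    have below: "\<And>i. i < r \<Longrightarrow> i \<notin> insert (Suc n) A" using insert(2) r1 by auto
    have W1: "Wt al be u n (insert r A) d = wc al be u (d r) * (\<Prod>i\<in>insert (Suc n) A. wc al be u (d i))" for d
    proof -
      have "insert (Suc n) (insert r A) = insert r (insert (Suc n) A)" by auto
      then show ?thesis unfolding Wt_def using rX finA by simp
    qed
    have W2: "Wt al be u n (insert r A) (c(r := v)) = wc al be u v * Wt al be u n A c" for c v
    proof -
      have "(\<Prod>i\<in>insert (Suc n) A. wc al be u ((c(r := v)) i)) = Wt al be u n A c"
        unfolding Wt_def using rX by (intro prod.cong) auto
      then show ?thesis using W1 by simp
    qed
    have cr: "c r = Empty" if "c \<in> cols n A" for c using that rX unfolding cols_def by auto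
    have W3: "Wt al be u n (insert r A) c = u * Wt al be u n A c" if "c \<in> cols n A" for c
    proof -
      have "c(r := Empty) = c" using cr[OF that] by (auto simp: fun_eq_iff)
      then show ?thesis using W2[of c Empty] by simp
    qed
    have inj: "inj_on (\<lambda>c. c(r := v)) (noA n A)" for v
    proof (rule inj_onI)
      fix c d assume "c \<in> noA n A" "d \<in> noA n A" "c(r := v) = d(r := v)"
      then show "c = d" using cr unfolding noA_def by (auto simp: fun_eq_iff) (metis)
    qed
    have E1: "{c \<in> cols n (insert r A). c r = Empty} = cols n A"
      using rX unfolding cols_def by auto
    have E2: "{c \<in> cols n (insert r A). c r = v} = (\<lambda>c. c(r := v)) ` noA n A" if v: "v \<noteq> Empty" for v
    proof (intro equalityI subsetI)
      fix c assume c: "c \<in> {c \<in> cols n (insert r A). c r = v}"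
      have noal: "c i \<noteq> Alpha" if "i \<noteq> r" for i
      proof
        assume ca: "c i = Alpha"
        show False
        proof (cases "i < r")
          case True
          then show False using c ca below[OF True] unfolding cols_def by auto
        next
          case False
          then have "r < i" using that by auto
          then show False using c ca v unfolding cols_def by auto
        qed
      qed
      have "c(r := Empty) \<in> noA n A"
        using c noal unfolding noA_def cols_def using r1 by auto
      moreover have "c = (c(r := Empty))(r := v)" using c by auto
      ultimately show "c \<in> (\<lambda>c. c(r := v)) ` noA n A" by blast
    next
      fix c' assume "c' \<in> (\<lambda>c. c(r := v)) ` noA n A"
      then obtain c where c: "c \<in> noA n A" "c' = c(r := v)" by auto
      have crE: "c r = Empty" using cr c unfolding noA_def by auto
      have "c' \<in> cols n (insert r A)" unfolding cols_def
      proof (intro CollectI conjI allI impI)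
        fix i assume "i \<notin> insert r A \<and> i \<noteq> Suc n"
        then show "c' i = Empty" using c unfolding noA_def cols_def by auto
      next
        show "c' (Suc n) \<noteq> Empty" using c r1 unfolding noA_def cols_def by auto
      next
        fix i i' assume h: "c' i = Alpha" "i' < i"
        then have "i = r" using c unfolding noA_def by (auto split: if_splits)
        then show "c' i' = Empty" using h c below[of i'] unfolding noA_def cols_def by auto
      qed
      then show "c' \<in> {c \<in> cols n (insert r A). c r = v}" using c by auto
    qed
    have F1: "{c \<in> noA n (insert r A). c r = Empty} = noA n A"
      using E1 unfolding noA_def by auto
    have F2: "{c \<in> noA n (insert r A). c r = Beta} = (\<lambda>c. c(r := Beta)) ` noA n A"
    proof -
      have "{c \<in> noA n (insert r A). c r = Beta} = {c \<in> cols n (insert r A). c r = Beta} \<inter> {c. \<forall>i. c i \<noteq> Alpha}"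
        unfolding noA_def by auto
      also have "\<dots> = (\<lambda>c. c(r := Beta)) ` noA n A \<inter> {c. \<forall>i. c i \<noteq> Alpha}" using E2[of Beta] by simp
      also have "\<dots> = (\<lambda>c. c(r := Beta)) ` noA n A" unfolding noA_def by (auto split: if_splits)
      finally show ?thesis .
    qed
    have F3: "{c \<in> noA n (insert r A). c r = Alpha} = {}" unfolding noA_def by auto
    have fin1: "finite (cols n (insert r A))" using finA by (intro finite_cols) auto
    have fin2: "finite (noA n (insert r A))" using fin1 unfolding noA_def by auto
    have S1: "(\<Sum>c\<in>cols n (insert r A). Wt al be u n (insert r A) c)
        = u * (\<Sum>c\<in>cols n A. Wt al be u n A c) + be * (\<Sum>c\<in>noA n A. Wt al be u n A c) + al * u * (\<Sum>c\<in>noA n A. Wt al be u n A c)"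
      unfolding sum_split3[OF fin1, of _ r] E1 E2[of Beta, simplified] E2[of Alpha, simplified]
      by (simp add: sum.reindex[OF inj] W2 W3 sum_distrib_left)
    have S2: "(\<Sum>c\<in>noA n (insert r A). Wt al be u n (insert r A) c)
        = u * (\<Sum>c\<in>noA n A. Wt al be u n A c) + be * (\<Sum>c\<in>noA n A. Wt al be u n A c)"
    proof -
      have nA: "c \<in> cols n A" if "c \<in> noA n A" for c using that unfolding noA_def by auto
      show ?thesis
        unfolding sum_split3[OF fin2, of _ r] F1 F2 F3
        by (simp add: sum.reindex[OF inj] W2 W3[OF nA] sum_distrib_left)
    qed
    have cardI: "card (insert r A) = Suc (card A)" using rA finA by simp
    show "(\<Sum>c\<in>cols n (insert r A). Wt al be u n (insert r A) c) = (be + al * u) * (u + be) ^ card (insert r A)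
        \<and> (\<Sum>c\<in>noA n (insert r A). Wt al be u n (insert r A) c) = be * (u + be) ^ card (insert r A)"
      unfolding S1 S2 IH1 IH2 cardI by (simp add: algebra_simps)
  qed
qed

lemma col_n:
  assumes R: "R \<subseteq> {1..n}"
  shows "{c \<in> cols n R. c n = Alpha} = (if n \<in> R then {\<lambda>i. if i = n then Alpha else if i = Suc n then Beta else Empty} else {})"
proof (intro equalityI subsetI)
  fix c assume c: "c \<in> {c \<in> cols n R. c n = Alpha}"
  then have nR: "n \<in> R" using cols_supp[of c n R n] by auto
  have "c i = (if i = n then Alpha else if i = Suc n then Beta else Empty)" for i
  proof -
    consider "i < n" | "i = n" | "i = Suc n" | "i > Suc n" by linarith
    then show ?thesis
    proof cases
      case 1
      have "\<forall>i'<n. c i' = Empty" using c unfolding cols_def by blast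
      then show ?thesis using 1 by auto
    next
      case 2 then show ?thesis using c by auto
    next
      case 3
      have "c (Suc n) \<noteq> Empty" using c unfolding cols_def by auto
      moreover have "c (Suc n) \<noteq> Alpha" using c unfolding cols_def by force
      ultimately show ?thesis using 3 cell.exhaust by (cases "c (Suc n)") auto
    next
      case 4
      then have "i \<notin> R" using R by auto
      then show ?thesis using c 4 unfolding cols_def by auto
    qed
  qed
  then show "c \<in> (if n \<in> R then {\<lambda>i. if i = n then Alpha else if i = Suc n then Beta else Empty} else {})"
    using nR by (auto simp: fun_eq_iff)
next
  fix c assume "c \<in> (if n \<in> R then {\<lambda>i. if i = n then Alpha else if i = Suc n then Beta else Empty} else {})"
  then show "c \<in> {c \<in> cols n R. c n = Alpha}" unfolding cols_def by (auto split: if_splits)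
qed

lemma Wt_cn:
  assumes R: "R \<subseteq> {1..n}" and nR: "n \<in> R"
  shows "Wt al be u n R (\<lambda>i. if i = n then Alpha else if i = Suc n then Beta else Empty) = al * be * u ^ card R"
proof -
  let ?c = "\<lambda>i. if i = n then Alpha else if i = Suc n then Beta else Empty"
  let ?X = "insert (Suc n) R"
  have fR: "finite R" using R by (rule finite_subset) auto
  have s1: "{i\<in>?X. ?c i = Alpha} = {n}" using nR by auto
  have s2: "{i\<in>?X. ?c i = Beta} = {Suc n}" by auto
  have s3: "{i\<in>?X. ?c i \<noteq> Beta} = R" using R by auto
  show ?thesis unfolding Wt_def prod_wc[OF finite_insert[THEN iffD2, OF fR]] s1 s2 s3 by simp
qed

lemma col_top:
  assumes R: "R \<subseteq> {1..n}"
  shows "{c \<in> cols n R. c (Suc n) \<noteq> Beta} = {\<lambda>i. if i = Suc n then Alpha else Empty}"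
proof (intro equalityI subsetI)
  fix c assume c: "c \<in> {c \<in> cols n R. c (Suc n) \<noteq> Beta}"
  then have cA: "c (Suc n) = Alpha" unfolding cols_def using cell.exhaust by auto
  have "c i = (if i = Suc n then Alpha else Empty)" for i
  proof -
    consider "i < Suc n" | "i = Suc n" | "i > Suc n" by linarith
    then show ?thesis
    proof cases
      case 1 then show ?thesis using c cA unfolding cols_def by auto
    next
      case 2 then show ?thesis using cA by auto
    next
      case 3
      then have "i \<notin> R" using R by auto
      then show ?thesis using c 3 unfolding cols_def by auto
    qed
  qed
  then show "c \<in> {\<lambda>i. if i = Suc n then Alpha else Empty}" by (auto simp: fun_eq_iff)
next
  fix c assume "c \<in> {\<lambda>i. if i = Suc n then Alpha else Empty}"
  then show "c \<in> {c \<in> cols n R. c (Suc n) \<noteq> Beta}" unfolding cols_def by auto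
qed

lemma Wt_ct:
  assumes R: "R \<subseteq> {1..n}"
  shows "Wt al be u n R (\<lambda>i. if i = Suc n then Alpha else Empty) = al * u * u ^ card R"
proof -
  let ?c = "\<lambda>i. if i = Suc n then Alpha else Empty"
  let ?X = "insert (Suc n) R"
  have fR: "finite R" using R by (rule finite_subset) auto
  have nR: "Suc n \<notin> R" using R by auto
  have s1: "{i\<in>?X. ?c i = Alpha} = {Suc n}" by auto
  have s2: "{i\<in>?X. ?c i = Beta} = {}" by auto
  have s3: "{i\<in>?X. ?c i \<noteq> Beta} = ?X" by auto
  show ?thesis unfolding Wt_def prod_wc[OF finite_insert[THEN iffD2, OF fR]] s1 s2 s3
    using card_insert_disjoint[OF fR nR] by simp
qed

definition Fs :: "real \<Rightarrow> real \<Rightarrow> nat \<Rightarrow> real \<Rightarrow> (nat \<Rightarrow> real) \<Rightarrow> real" where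
  "Fs al be n u g = (\<Sum>T\<in>staircase n. wt al be n T * u ^ card (freeR n T) * g (A_count n T))"

definition Gs :: "real \<Rightarrow> real \<Rightarrow> nat \<Rightarrow> real \<Rightarrow> (nat \<Rightarrow> real) \<Rightarrow> real" where
  "Gs al be n u h = (\<Sum>T\<in>staircase n. wt al be n T * u ^ card (freeR n T) * (if n \<in> freeR n T then h (A_count n T) else 0))"

lemma col_sum_g:
  assumes R: "R \<subseteq> {1..n}"
  shows "(\<Sum>c\<in>cols n R. Wt al be u n R c * g (a + (if c n = Alpha then 1 else 0)))
       = (be + al * u) * (u + be) ^ card R * g a + (if n \<in> R then al * be * u ^ card R * (g (Suc a) - g a) else 0)"
proof -
  have fR: "finite R" using R by (rule finite_subset) auto
  have fC: "finite (cols n R)" using fR by (rule finite_cols)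
  have "(\<Sum>c\<in>cols n R. Wt al be u n R c * g (a + (if c n = Alpha then 1 else 0)))
      = (\<Sum>c\<in>cols n R. Wt al be u n R c * g a) + (\<Sum>c\<in>cols n R. if c n = Alpha then Wt al be u n R c * (g (Suc a) - g a) else 0)"
    unfolding sum.distrib[symmetric] by (intro sum.cong) (auto simp: algebra_simps)
  also have "(\<Sum>c\<in>cols n R. Wt al be u n R c * g a) = (\<Sum>c\<in>cols n R. Wt al be u n R c) * g a"
    by (simp add: sum_distrib_right)
  also have "(\<Sum>c\<in>cols n R. Wt al be u n R c) = (be + al * u) * (u + be) ^ card R"
    using col_sums[OF fR] R by blast
  also have "(\<Sum>c\<in>cols n R. if c n = Alpha then Wt al be u n R c * (g (Suc a) - g a) else 0)
      = (\<Sum>c\<in>{c\<in>cols n R. c n = Alpha}. Wt al be u n R c * (g (Suc a) - g a))"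
    unfolding sum.inter_filter[OF fC, symmetric] ..
  also have "\<dots> = (if n \<in> R then al * be * u ^ card R * (g (Suc a) - g a) else 0)"
    unfolding col_n[OF R] using Wt_cn[OF R] by auto
  finally show ?thesis .
qed

lemma Fs_Suc:
  "Fs al be (Suc n) u g = (be + al * u) * Fs al be n (u + be) g + al * be * Gs al be n u (\<lambda>a. g (Suc a) - g a)"
proof -
  have "Fs al be (Suc n) u g = (\<Sum>T\<in>staircase n. \<Sum>c\<in>cols n (freeR n T).
      wt al be (Suc n) (glue c T) * u ^ card (freeR (Suc n) (glue c T)) * g (A_count (Suc n) (glue c T)))"
    unfolding Fs_def by (rule sum_glue)
  also have "\<dots> = (\<Sum>T\<in>staircase n. wt al be n T * (\<Sum>c\<in>cols n (freeR n T).
      Wt al be u n (freeR n T) c * g (A_count n T + (if c n = Alpha then 1 else 0))))"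
    unfolding sum_distrib_left by (intro sum.cong refl) (simp add: wt_glue A_glue mult.assoc)
  also have "\<dots> = (\<Sum>T\<in>staircase n. wt al be n T * ((be + al * u) * (u + be) ^ card (freeR n T) * g (A_count n T)
      + (if n \<in> freeR n T then al * be * u ^ card (freeR n T) * (g (Suc (A_count n T)) - g (A_count n T)) else 0)))"
    by (intro sum.cong refl) (simp add: col_sum_g[OF freeR_sub])
  also have "\<dots> = (be + al * u) * Fs al be n (u + be) g + al * be * Gs al be n u (\<lambda>a. g (Suc a) - g a)"
    unfolding Fs_def Gs_def sum_distrib_left sum.distrib[symmetric]
    by (intro sum.cong refl) (auto simp: algebra_simps)
  finally show ?thesis .
qed

lemma Gs_Suc: "Gs al be (Suc n) u h = al * u * Fs al be n u h"
proof -
  have "Gs al be (Suc n) u h = (\<Sum>T\<in>staircase n. \<Sum>c\<in>cols n (freeR n T).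
      wt al be (Suc n) (glue c T) * u ^ card (freeR (Suc n) (glue c T)) *
      (if Suc n \<in> freeR (Suc n) (glue c T) then h (A_count (Suc n) (glue c T)) else 0))"
    unfolding Gs_def by (rule sum_glue)
  also have "\<dots> = (\<Sum>T\<in>staircase n. wt al be n T * (\<Sum>c\<in>cols n (freeR n T).
      (if c (Suc n) \<noteq> Beta then Wt al be u n (freeR n T) c * h (A_count n T + (if c n = Alpha then 1 else 0)) else 0)))"
    unfolding sum_distrib_left
  proof (intro sum.cong refl)
    fix T c assume T: "T \<in> staircase n" and c: "c \<in> cols n (freeR n T)"
    have m: "(Suc n \<in> freeR (Suc n) (glue c T)) = (c (Suc n) \<noteq> Beta)" unfolding freeR_glue[OF T c] by auto
    show "wt al be (Suc n) (glue c T) * u ^ card (freeR (Suc n) (glue c T)) *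
      (if Suc n \<in> freeR (Suc n) (glue c T) then h (A_count (Suc n) (glue c T)) else 0) =
      wt al be n T * (if c (Suc n) \<noteq> Beta then Wt al be u n (freeR n T) c * h (A_count n T + (if c n = Alpha then 1 else 0)) else 0)"
      unfolding m A_glue[OF T c] wt_glue[OF T c] by simp
  qed
  also have "\<dots> = (\<Sum>T\<in>staircase n. wt al be n T * (al * u * u ^ card (freeR n T) * h (A_count n T)))"
  proof (intro sum.cong refl arg_cong2[where f = "(*)"])
    fix T assume T: "T \<in> staircase n"
    have fC: "finite (cols n (freeR n T))" by (intro finite_cols finite_freeR)
    show "(\<Sum>c\<in>cols n (freeR n T). (if c (Suc n) \<noteq> Beta then Wt al be u n (freeR n T) c * h (A_count n T + (if c n = Alpha then 1 else 0)) else 0))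
        = al * u * u ^ card (freeR n T) * h (A_count n T)"
      unfolding sum.inter_filter[OF fC, symmetric] col_top[OF freeR_sub] by (simp add: Wt_ct[OF freeR_sub])
  qed
  also have "\<dots> = al * u * Fs al be n u h"
    unfolding Fs_def sum_distrib_left by (intro sum.cong refl) (simp add: algebra_simps)
  finally show ?thesis .
qed

lemma Gs_0: "Gs al be 0 u h = 0"
  unfolding Gs_def freeR_def by simp

lemma staircase_0: "staircase 0 = {\<lambda>_. Empty}"
proof (intro equalityI subsetI)
  fix S assume "S \<in> staircase 0"
  then have "S b = Empty" for b using st_empty[of S 0 b] unfolding is_box_def by (cases b) auto
  then show "S \<in> {\<lambda>_. Empty}" by auto
qed (auto simp: staircase_def is_box_def)

lemma Fs_0: "Fs al be 0 u g = g 0"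
proof -
  have "freeR 0 (\<lambda>_. Empty) = {}" unfolding freeR_def by auto
  then show ?thesis unfolding Fs_def staircase_0 by (simp add: wt_def num_sym_def A_count_def)
qed



lemma Fs_add: "Fs al be n u (\<lambda>a. f a + g a) = Fs al be n u f + Fs al be n u g"
  unfolding Fs_def by (simp add: sum.distrib algebra_simps)

lemma Fs_cmult: "Fs al be n u (\<lambda>a. c * f a) = c * Fs al be n u f"
  unfolding Fs_def by (simp add: sum_distrib_left algebra_simps)

lemma Fs_sum: "finite I \<Longrightarrow> Fs al be n u (\<lambda>a. \<Sum>i\<in>I. f i a) = (\<Sum>i\<in>I. Fs al be n u (f i))"
  unfolding Fs_def by (simp add: sum_distrib_left sum.swap[of _ I])

lemma Fs_diff: "Fs al be n u (\<lambda>a. f a - g a) = Fs al be n u f - Fs al be n u g"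
  unfolding Fs_def by (simp add: sum_subtractf algebra_simps)

lemma wt_nonneg: "0 \<le> al \<Longrightarrow> 0 \<le> be \<Longrightarrow> 0 \<le> wt al be n T"
  unfolding wt_def by simp

lemma wt_pos: "0 < al \<Longrightarrow> 0 < be \<Longrightarrow> 0 < wt al be n T"
  unfolding wt_def by simp

lemma Fs_nonneg: "0 \<le> al \<Longrightarrow> 0 \<le> be \<Longrightarrow> 0 \<le> u \<Longrightarrow> (\<And>a. 0 \<le> g a) \<Longrightarrow> 0 \<le> Fs al be n u g"
  unfolding Fs_def by (intro sum_nonneg mult_nonneg_nonneg wt_nonneg) auto

lemma Gs_zero: "Gs al be n u (\<lambda>_. 0) = 0"
  unfolding Gs_def by simp

lemma Z_prod: "Fs al be n u (\<lambda>_. 1) = (\<Prod>i<n. be + al * (u + real i * be))"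
proof (induction n arbitrary: u)
  case 0 then show ?case by (simp add: Fs_0)
next
  case (Suc n)
  have "Fs al be (Suc n) u (\<lambda>_. 1) = (be + al * u) * Fs al be n (u + be) (\<lambda>_. 1)"
    using Fs_Suc[of al be n u "\<lambda>_. 1"] Gs_zero by simp
  also have "\<dots> = (\<Prod>i<Suc n. be + al * (u + real i * be))"
    unfolding Suc prod.lessThan_Suc_shift by (simp add: algebra_simps)
  finally show ?case .
qed

lemma Z_pos: "0 < al \<Longrightarrow> 0 < be \<Longrightarrow> 0 \<le> u \<Longrightarrow> 0 < Fs al be n u (\<lambda>_. 1)"
  unfolding Z_prod by (intro prod_pos) (auto intro!: add_pos_nonneg)

lemma mk_cc:
  assumes al: "0 < al" and be: "0 < be" and u: "0 < u"
  shows "Fs al be n u (\<lambda>a. real (a choose k)) = Fs al be n u (\<lambda>_. 1) * cc (1/al) k n (u / be)"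
  using u
proof (induction n arbitrary: k u rule: less_induct)
  case (less n)
  show ?case
  proof (cases k)
    case 0 then show ?thesis by simp
  next
    case (Suc k')
    show ?thesis
    proof (cases n)
      case 0 then show ?thesis using Suc by (simp add: Fs_0)
    next
      case (Suc n')
      show ?thesis
      proof (cases n')
        case 0
        have "Fs al be (Suc 0) u (\<lambda>a. real (a choose k)) = 0"
          using Fs_Suc[of al be 0 u] \<open>k = Suc k'\<close> by (simp add: Fs_0 Gs_0)
        then show ?thesis using \<open>n = Suc n'\<close> 0 \<open>k = Suc k'\<close> by simp
      next
        case (Suc m)
        have n: "n = Suc (Suc m)" using \<open>n = Suc n'\<close> Suc by simp
        define x where "x = u / be"
        define a where "a = 1 / al"
        define q where "q i = be + al * (u + real i * be)" for i
        have qx: "q i = al * be * (x + a + real i)" for i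
          unfolding q_def x_def a_def using al be by (simp add: field_simps)
        have Z1: "Fs al be (Suc (Suc m)) u (\<lambda>_. 1) = (be + al * u) * Fs al be (Suc m) (u + be) (\<lambda>_. 1)"
          using Fs_Suc[of al be "Suc m" u "\<lambda>_. 1"] Gs_zero by simp
        have Z2: "Fs al be (Suc (Suc m)) u (\<lambda>_. 1) = Fs al be m u (\<lambda>_. 1) * (q m * q (Suc m))"
          unfolding Z_prod q_def by (simp add: mult_ac)
        have dg: "(\<lambda>a. real (Suc a choose Suc k') - real (a choose Suc k')) = (\<lambda>a. real (a choose k'))"
          by (auto simp: fun_eq_iff)
        have rec: "Fs al be (Suc (Suc m)) u (\<lambda>a. real (a choose Suc k'))
            = (be + al * u) * Fs al be (Suc m) (u + be) (\<lambda>a. real (a choose Suc k')) + al * be * (al * u * Fs al be m u (\<lambda>a. real (a choose k')))"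
          using Fs_Suc[of al be "Suc m" u "\<lambda>a. real (a choose Suc k')"] unfolding Gs_Suc dg by simp
        have IH1: "Fs al be (Suc m) (u + be) (\<lambda>a. real (a choose Suc k')) = Fs al be (Suc m) (u + be) (\<lambda>_. 1) * cc a (Suc k') (Suc m) (x + 1)"
        proof -
          have "(u + be) / be = x + 1" unfolding x_def using be by (simp add: field_simps)
          then show ?thesis using less.IH[of "Suc m", where k="Suc k'" and u="u + be"] n less.prems be unfolding a_def by simp
        qed
        have IH2: "Fs al be m u (\<lambda>a. real (a choose k')) = Fs al be m u (\<lambda>_. 1) * cc a k' m x"
          using less.IH[of m, where k="k'" and u=u] n less.prems unfolding a_def x_def by simp
        have key: "al * be * (al * u) = q m * q (Suc m) * (x / ((x + a + real m) * (x + a + real m + 1)))"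
        proof -
          have p: "x + a + real m > 0" "x + a + real m + 1 > 0"
            unfolding x_def a_def using al be less.prems by (auto intro!: add_pos_nonneg)
          define D where "D = (x + a + real m) * (x + a + real m + 1)"
          have D0: "D \<noteq> 0" using p unfolding D_def by simp
          have "q m * q (Suc m) = (al * be) * (al * be) * D" unfolding qx D_def by (simp add: algebra_simps)
          then have "q m * q (Suc m) * (x / ((x + a + real m) * (x + a + real m + 1))) = al * be * (al * be) * x"
            using D0 unfolding D_def[symmetric] by simp
          then show ?thesis unfolding x_def using be by (simp add: field_simps)
        qed
        define C1 where "C1 = cc a (Suc k') (Suc m) (x + 1)"
        define C2 where "C2 = cc a k' m x"
        define D where "D = (x + a + real m) * (x + a + real m + 1)"
        have cs: "cc a (Suc k') (Suc (Suc m)) x = C1 + x * C2 / D"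
          unfolding C1_def C2_def D_def by (rule cc_step)
        have "Fs al be (Suc (Suc m)) u (\<lambda>a. real (a choose Suc k'))
            = (be + al * u) * Fs al be (Suc m) (u + be) (\<lambda>_. 1) * C1 + al * be * (al * u) * (Fs al be m u (\<lambda>_. 1) * C2)"
          unfolding rec IH1 IH2 C1_def[symmetric] C2_def[symmetric] by (simp only: mult.assoc)
        also have "\<dots> = Fs al be (Suc (Suc m)) u (\<lambda>_. 1) * C1 + Fs al be m u (\<lambda>_. 1) * (q m * q (Suc m)) * (x / D) * C2"
          unfolding Z1 key D_def by (simp only: mult_ac)
        also have "\<dots> = Fs al be (Suc (Suc m)) u (\<lambda>_. 1) * (C1 + x * C2 / D)"
          unfolding Z2[symmetric] by (simp add: algebra_simps)
        finally show ?thesis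
          unfolding n \<open>k = Suc k'\<close> x_def[symmetric] a_def[symmetric] cs .
      qed
    qed
  qed
qed

definition Pn :: "real \<Rightarrow> real \<Rightarrow> nat \<Rightarrow> nat \<Rightarrow> real" where
  "Pn al be n j = Fs al be n 1 (\<lambda>a. if a = j then 1 else 0) / Fs al be n 1 (\<lambda>_. 1)"

lemma bonf_Fs:
  assumes al: "0 < al" and be: "0 < be"
  shows "0 \<le> (-1)^M * ((\<Sum>i\<le>M. (-1)^i * real (j+i choose j) * cc (1/al) (j+i) N (1/be)) - Pn al be N j)"
proof -
  define Z where "Z = Fs al be N 1 (\<lambda>_. 1)"
  have Z0: "0 < Z" unfolding Z_def using al be by (intro Z_pos) auto
  have c: "cc (1/al) k N (1/be) = Fs al be N 1 (\<lambda>a. real (a choose k)) / Z" for k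
    using mk_cc[OF al be, of 1 N k] Z0 unfolding Z_def by simp
  have "(\<Sum>i\<le>M. (-1)^i * real (j+i choose j) * cc (1/al) (j+i) N (1/be))
      = Fs al be N 1 (\<lambda>a. bonf j M a) / Z"
  proof -
    have "Fs al be N 1 (\<lambda>a. bonf j M a) = (\<Sum>i\<le>M. Fs al be N 1 (\<lambda>a. (-1)^i * real (j+i choose j) * real (a choose (j+i))))"
      unfolding bonf_def by (rule Fs_sum) simp
    also have "\<dots> = (\<Sum>i\<le>M. (-1)^i * real (j+i choose j) * Fs al be N 1 (\<lambda>a. real (a choose (j+i))))"
      by (intro sum.cong refl) (simp add: Fs_cmult[symmetric] mult.assoc)
    finally show ?thesis unfolding c by (simp add: mult.assoc sum_divide_distrib)
  qed
  then have "(-1)^M * ((\<Sum>i\<le>M. (-1)^i * real (j+i choose j) * cc (1/al) (j+i) N (1/be)) - Pn al be N j)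
      = Fs al be N 1 (\<lambda>a. (-1)^M * (bonf j M a - (if a = j then 1 else 0))) / Z"
    unfolding Pn_def Z_def[symmetric] Fs_cmult Fs_diff by (simp add: diff_divide_distrib[symmetric])
  also have "\<dots> \<ge> 0" using al be Z0 by (intro divide_nonneg_pos Fs_nonneg bonf_sign) auto
  finally show ?thesis .
qed

lemma Pn_lim:
  assumes al: "0 < al" and be: "0 < be"
  shows "(\<lambda>N. Pn al be N j) \<longlonglongrightarrow> (1/2)^j / fact j * exp (-1/2)"
proof (rule poisson_lim[where m = "\<lambda>N k. cc (1/al) k N (1/be)"])
  show "0 \<le> (-1)^M * ((\<Sum>i\<le>M. (-1)^i * real (j+i choose j) * cc (1/al) (j+i) N (1/be)) - Pn al be N j)" for N M
    by (rule bonf_Fs[OF al be])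
  show "(\<lambda>N. cc (1/al) k N (1/be)) \<longlonglongrightarrow> (1/2)^k / fact k" for k
    using al be by (intro cc_limit) auto
qed

lemma cdf_A_law:
  assumes al: "0 < al" and be: "0 < be"
  shows "cdf (A_law al be n) x = (\<Sum>j<nat (\<lfloor>x\<rfloor> + 1). Pn al be n j)"
proof -
  define K where "K = nat (\<lfloor>x\<rfloor> + 1)"
  define Z where "Z = Fs al be n 1 (\<lambda>_. 1)"
  have Z0: "0 < Z" unfolding Z_def using al be by (intro Z_pos) auto
  have Zs: "(\<Sum>T\<in>staircase n. wt al be n T) = Z" unfolding Z_def Fs_def by simp
  have sp: "stair_prob al be n S = wt al be n S / Z" for S unfolding stair_prob_def Zs ..
  have sp0: "0 \<le> stair_prob al be n S" for S unfolding sp using Z0 wt_pos[OF al be] by (simp add: less_imp_le)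
  have Kiff: "real a \<le> x \<longleftrightarrow> a < K" for a :: nat
    unfolding K_def by linarith
  have "cdf (A_law al be n) x = measure (stair_measure al be n) ((\<lambda>S. real (A_count n S)) -` {..x} \<inter> space (stair_measure al be n))"
    unfolding cdf_def A_law_def by (rule measure_distr) (auto simp: stair_measure_def)
  also have "(\<lambda>S. real (A_count n S)) -` {..x} \<inter> space (stair_measure al be n) = {S \<in> staircase n. A_count n S < K}"
    unfolding stair_measure_def space_point_measure using Kiff by auto
  also have "measure (stair_measure al be n) {S \<in> staircase n. A_count n S < K} = (\<Sum>S\<in>{S \<in> staircase n. A_count n S < K}. stair_prob al be n S)"
    unfolding stair_measure_def using sp0 finite_staircase by (subst measure_point_measure_finite_if) auto
  also have "\<dots> = (\<Sum>S\<in>staircase n. stair_prob al be n S * (if A_count n S < K then 1 else 0))"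
    using finite_staircase by (simp add: sum.inter_filter[symmetric] if_distrib cong: if_cong)
  also have "\<dots> = Fs al be n 1 (\<lambda>a. if a < K then 1 else 0) / Z"
    unfolding Fs_def sp sum_divide_distrib by (simp add: algebra_simps)
  also have "(\<lambda>a. if a < K then 1 else 0) = (\<lambda>a. \<Sum>j<K. if a = j then 1 else (0::real))"
    by (auto simp: fun_eq_iff)
  also have "Fs al be n 1 (\<lambda>a. \<Sum>j<K. if a = j then 1 else (0::real)) / Z = (\<Sum>j<K. Pn al be n j)"
    unfolding Fs_sum[OF finite_lessThan] Pn_def Z_def[symmetric] sum_divide_distrib ..
  finally show ?thesis unfolding K_def .
qed

lemma cdf_poisson:
  "cdf (distr (measure_pmf (poisson_pmf (1/2))) borel real) x = (\<Sum>j<nat (\<lfloor>x\<rfloor> + 1). pmf (poisson_pmf (1/2)) j)"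
proof -
  define K where "K = nat (\<lfloor>x\<rfloor> + 1)"
  have Kiff: "real a \<le> x \<longleftrightarrow> a < K" for a :: nat
    unfolding K_def by linarith
  have "cdf (distr (measure_pmf (poisson_pmf (1/2))) borel real) x = measure (measure_pmf (poisson_pmf (1/2))) (real -` {..x} \<inter> space (measure_pmf (poisson_pmf (1/2))))"
    unfolding cdf_def by (rule measure_distr) auto
  also have "real -` {..x} \<inter> space (measure_pmf (poisson_pmf (1/2))) = {..<K}"
    using Kiff by auto
  also have "measure (measure_pmf (poisson_pmf (1/2))) {..<K} = (\<Sum>j<K. pmf (poisson_pmf (1/2)) j)"
    by (rule measure_measure_pmf_finite) simp
  finally show ?thesis unfolding K_def .
qed

theorem theorem3p5:
  fixes \<alpha> \<beta> :: real
  assumes "\<alpha> > 0" and "\<beta> > 0"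
  shows "weak_conv_m (\<lambda>n. A_law \<alpha> \<beta> n) (distr (measure_pmf (poisson_pmf (1/2))) borel real)"
  unfolding weak_conv_m_def weak_conv_def
proof (intro allI impI)
  fix x :: real
  show "(\<lambda>n. cdf (A_law \<alpha> \<beta> n) x) \<longlonglongrightarrow> cdf (distr (measure_pmf (poisson_pmf (1/2))) borel real) x"
    unfolding cdf_A_law[OF assms] cdf_poisson
  proof (intro tendsto_sum)
    fix j
    have "pmf (poisson_pmf (1/2)) j = (1/2)^j / fact j * exp (-1/2)"
      by (subst pmf_poisson) auto
    then show "(\<lambda>n. Pn \<alpha> \<beta> n j) \<longlonglongrightarrow> pmf (poisson_pmf (1/2)) j"
      using Pn_lim[OF assms] by simp
  qed
qed


end
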